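(* Let $\Lambda$ be a finite $k$-graph each of whose coordinate matrices $A_1,\dots,A_k$ is irreducible. Suppose there exist an $\mathbb{R}_+$-functor $y$ on $\Lambda$ and $\beta\in(0,\infty)$ such that for all $\lambda,\nu\in\Lambda$, $$y(\lambda)+\tfrac1\beta\ln\big(\rho(B(y,\beta))^{d(\lambda)}\big)=y(\nu)+\tfrac1\beta\ln\big(\rho(B(y,\beta))^{d(\nu)}\big)\ \Longrightarrow\ d(\lambda)=d(\nu).$$ Then $\Lambda$ is aperiodic.
   Context: A $k$-graph is a countable small category $\Lambda$ with a degree functor $d:\Lambda\to\mathbb{N}^k$ satisfying unique factorization: if $d(\lambda)=m+n$ there are unique $\eta,\nu$ with $\lambda=\eta\nu$, $d(\eta)=m$, $d(\nu)=n$. $\Lambda^n=d^{-1}(n)$, $\Lambda^0$ = vertices, $r,s$ range/source, $v\Lambda^nw$ paths of degree $n$ from $w$ to $v$; finite: each $\Lambda^n$ finite. Coordinate matrices: $A_i(v,w)=|v\Lambda^{e_i}w|$; a square nonnegative matrix is irreducible if for every pair of indices $(v,w)$ some power has positive $(v,w)$ entry. (Coordinatewise irreducibility implies $\Lambda$ is strongly connected, i.e. $v\Lambda w\neq\emptyset$ for all vertices.) An $\mathbb{R}_+$-functor is $y:\Lambda\to[0,\infty)$ with $y(v)=0$ on vertices and $y(\lambda\nu)=y(\lambda)+y(\nu)$ when $s(\lambda)=r(\nu)$. $B_i(y,\beta)_{v,w}=\sum_{\lambda\in v\Lambda^{e_i}w}e^{-\beta y(\lambda)}$; $\rho$ = spectral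 radius ($>0$); $\rho(B(y,\beta))^m=\prod_i\rho(B_i(y,\beta))^{m_i}$. $\Lambda^\infty$: degree-preserving functors from $\Omega_k$ (objects $\mathbb{N}^k$, morphisms $(m,n)$, $m\le n$, $d(m,n)=n-m$) into $\Lambda$; $Z(v)=\{x:x(0,0)=v\}$; $\sigma^j(x)(m,n)=x(m+j,n+j)$. $\mathrm{Per}(v)$ is the subgroup of $\mathbb{Z}^k$ generated by $\{m-n:\sigma^m(x)=\sigma^n(x)\ \forall x\in Z(v)\}$; for strongly connected finite $\Lambda$ it is independent of $v$, denoted $\mathrm{Per}\,\Lambda$; $\Lambda$ is aperiodic iff $\mathrm{Per}\,\Lambda=\{0\}$. *)

theory Defs
  imports Complex_Main "HOL-Library.Countable_Set"
begin

text \<open>Degrees: elements of N^k are encoded as functions nat => nat vanishing outside {..<k}.\<close>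
definition Nk :: "nat \<Rightarrow> (nat \<Rightarrow> nat) set" where
  "Nk k = {m. \<forall>i\<ge>k. m i = 0}"

definition unitvec :: "nat \<Rightarrow> nat \<Rightarrow> nat" where
  "unitvec i = (\<lambda>j. if j = i then 1 else 0)"

text \<open>A k-graph: morphism set Mor, range r, source s, composition cmp (meaningful when
  s a = r b), degree functor d.  Objects are identified with identity morphisms.\<close>
definition kgraph :: "nat \<Rightarrow> 'a set \<Rightarrow> ('a \<Rightarrow> 'a) \<Rightarrow> ('a \<Rightarrow> 'a) \<Rightarrow> ('a \<Rightarrow> 'a \<Rightarrow> 'a)
    \<Rightarrow> ('a \<Rightarrow> nat \<Rightarrow> nat) \<Rightarrow> bool" where
  "kgraph k Mor r s cmp d \<longleftrightarrow>
     countable Mor \<and>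
     (\<forall>l\<in>Mor. r l \<in> Mor \<and> s l \<in> Mor \<and> d (r l) = (\<lambda>_. 0) \<and> d (s l) = (\<lambda>_. 0)) \<and>
     (\<forall>v\<in>Mor. d v = (\<lambda>_. 0) \<longrightarrow> r v = v \<and> s v = v) \<and>
     (\<forall>l\<in>Mor. cmp (r l) l = l \<and> cmp l (s l) = l) \<and>
     (\<forall>a\<in>Mor. \<forall>b\<in>Mor. s a = r b \<longrightarrow>
        cmp a b \<in> Mor \<and> r (cmp a b) = r a \<and> s (cmp a b) = s b \<and>
        d (cmp a b) = (\<lambda>i. d a i + d b i)) \<and>
     (\<forall>a\<in>Mor. \<forall>b\<in>Mor. \<forall>c\<in>Mor. s a = r b \<and> s b = r c \<longrightarrow>
        cmp (cmp a b) c = cmp a (cmp b c)) \<and>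
     (\<forall>l\<in>Mor. d l \<in> Nk k) \<and>
     (\<forall>l\<in>Mor. \<forall>m\<in>Nk k. \<forall>n\<in>Nk k. d l = (\<lambda>i. m i + n i) \<longrightarrow>
        (\<exists>!p. fst p \<in> Mor \<and> snd p \<in> Mor \<and> s (fst p) = r (snd p) \<and>
              l = cmp (fst p) (snd p) \<and> d (fst p) = m \<and> d (snd p) = n))"

definition finite_kgraph :: "nat \<Rightarrow> 'a set \<Rightarrow> ('a \<Rightarrow> nat \<Rightarrow> nat) \<Rightarrow> bool" where
  "finite_kgraph k Mor d \<longleftrightarrow> (\<forall>n\<in>Nk k. finite {l\<in>Mor. d l = n})"

definition vertices :: "'a set \<Rightarrow> ('a \<Rightarrow> nat \<Rightarrow> nat) \<Rightarrow> 'a set" where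
  "vertices Mor d = {l\<in>Mor. d l = (\<lambda>_. 0)}"

definition paths_between :: "'a set \<Rightarrow> ('a \<Rightarrow> 'a) \<Rightarrow> ('a \<Rightarrow> 'a) \<Rightarrow> ('a \<Rightarrow> nat \<Rightarrow> nat)
    \<Rightarrow> 'a \<Rightarrow> (nat \<Rightarrow> nat) \<Rightarrow> 'a \<Rightarrow> 'a set" where
  "paths_between Mor r s d v n w = {l\<in>Mor. d l = n \<and> r l = v \<and> s l = w}"

fun mat_pow :: "'a set \<Rightarrow> ('a \<Rightarrow> 'a \<Rightarrow> real) \<Rightarrow> nat \<Rightarrow> 'a \<Rightarrow> 'a \<Rightarrow> real" where
  "mat_pow V M 0 = (\<lambda>v w. if v = w then 1 else 0)"
| "mat_pow V M (Suc n) = (\<lambda>v w. \<Sum>u\<in>V. mat_pow V M n v u * M u w)"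

definition irreducible_mat :: "'a set \<Rightarrow> ('a \<Rightarrow> 'a \<Rightarrow> real) \<Rightarrow> bool" where
  "irreducible_mat V M \<longleftrightarrow> (\<forall>v\<in>V. \<forall>w\<in>V. \<exists>n\<ge>1. mat_pow V M n v w > 0)"

definition mat_eigenvalue :: "'a set \<Rightarrow> ('a \<Rightarrow> 'a \<Rightarrow> real) \<Rightarrow> complex \<Rightarrow> bool" where
  "mat_eigenvalue V M c \<longleftrightarrow> (\<exists>z :: 'a \<Rightarrow> complex. (\<exists>v\<in>V. z v \<noteq> 0) \<and>
      (\<forall>v\<in>V. (\<Sum>w\<in>V. complex_of_real (M v w) * z w) = c * z v))"

definition spectral_radius_mat :: "'a set \<Rightarrow> ('a \<Rightarrow> 'a \<Rightarrow> real) \<Rightarrow> real" where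
  "spectral_radius_mat V M = Max {cmod c | c. mat_eigenvalue V M c}"

definition coord_mat :: "'a set \<Rightarrow> ('a \<Rightarrow> 'a) \<Rightarrow> ('a \<Rightarrow> 'a) \<Rightarrow> ('a \<Rightarrow> nat \<Rightarrow> nat)
    \<Rightarrow> nat \<Rightarrow> 'a \<Rightarrow> 'a \<Rightarrow> real" where
  "coord_mat Mor r s d i v w = real (card (paths_between Mor r s d v (unitvec i) w))"

definition B_mat :: "'a set \<Rightarrow> ('a \<Rightarrow> 'a) \<Rightarrow> ('a \<Rightarrow> 'a) \<Rightarrow> ('a \<Rightarrow> nat \<Rightarrow> nat)
    \<Rightarrow> ('a \<Rightarrow> real) \<Rightarrow> real \<Rightarrow> nat \<Rightarrow> 'a \<Rightarrow> 'a \<Rightarrow> real" where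
  "B_mat Mor r s d y \<beta> i v w = (\<Sum>l\<in>paths_between Mor r s d v (unitvec i) w. exp (- \<beta> * y l))"

definition rplus_functor :: "'a set \<Rightarrow> ('a \<Rightarrow> 'a) \<Rightarrow> ('a \<Rightarrow> 'a) \<Rightarrow> ('a \<Rightarrow> 'a \<Rightarrow> 'a)
    \<Rightarrow> ('a \<Rightarrow> nat \<Rightarrow> nat) \<Rightarrow> ('a \<Rightarrow> real) \<Rightarrow> bool" where
  "rplus_functor Mor r s cmp d y \<longleftrightarrow>
     (\<forall>l\<in>Mor. y l \<ge> 0) \<and> (\<forall>v\<in>vertices Mor d. y v = 0) \<and>
     (\<forall>a\<in>Mor. \<forall>b\<in>Mor. s a = r b \<longrightarrow> y (cmp a b) = y a + y b)"

text \<open>Infinite paths: degree-preserving functors Omega_k -> Lambda, given by their values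
  on morphisms (m,n), m <= n in N^k.\<close>
definition inf_paths :: "nat \<Rightarrow> 'a set \<Rightarrow> ('a \<Rightarrow> 'a) \<Rightarrow> ('a \<Rightarrow> 'a) \<Rightarrow> ('a \<Rightarrow> 'a \<Rightarrow> 'a)
    \<Rightarrow> ('a \<Rightarrow> nat \<Rightarrow> nat) \<Rightarrow> ((nat \<Rightarrow> nat) \<Rightarrow> (nat \<Rightarrow> nat) \<Rightarrow> 'a) set" where
  "inf_paths k Mor r s cmp d = {x. \<forall>m\<in>Nk k. \<forall>n\<in>Nk k. m \<le> n \<longrightarrow>
      x m n \<in> Mor \<and> d (x m n) = (\<lambda>i. n i - m i) \<and>
      (\<forall>p\<in>Nk k. n \<le> p \<longrightarrow> s (x m n) = r (x n p) \<and> x m p = cmp (x m n) (x n p))}"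

definition Zcyl :: "nat \<Rightarrow> 'a set \<Rightarrow> ('a \<Rightarrow> 'a) \<Rightarrow> ('a \<Rightarrow> 'a) \<Rightarrow> ('a \<Rightarrow> 'a \<Rightarrow> 'a)
    \<Rightarrow> ('a \<Rightarrow> nat \<Rightarrow> nat) \<Rightarrow> 'a \<Rightarrow> ((nat \<Rightarrow> nat) \<Rightarrow> (nat \<Rightarrow> nat) \<Rightarrow> 'a) set" where
  "Zcyl k Mor r s cmp d v = {x\<in>inf_paths k Mor r s cmp d. x (\<lambda>_. 0) (\<lambda>_. 0) = v}"

definition shift :: "(nat \<Rightarrow> nat) \<Rightarrow> ((nat \<Rightarrow> nat) \<Rightarrow> (nat \<Rightarrow> nat) \<Rightarrow> 'a)
    \<Rightarrow> (nat \<Rightarrow> nat) \<Rightarrow> (nat \<Rightarrow> nat) \<Rightarrow> 'a" where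
  "shift j x = (\<lambda>m n. x (\<lambda>i. m i + j i) (\<lambda>i. n i + j i))"

text \<open>Equality of infinite paths = equality as functors on Omega_k.\<close>
definition path_eq :: "nat \<Rightarrow> ((nat \<Rightarrow> nat) \<Rightarrow> (nat \<Rightarrow> nat) \<Rightarrow> 'a)
    \<Rightarrow> ((nat \<Rightarrow> nat) \<Rightarrow> (nat \<Rightarrow> nat) \<Rightarrow> 'a) \<Rightarrow> bool" where
  "path_eq k x x' \<longleftrightarrow> (\<forall>m\<in>Nk k. \<forall>n\<in>Nk k. m \<le> n \<longrightarrow> x m n = x' m n)"

definition per_gens :: "nat \<Rightarrow> 'a set \<Rightarrow> ('a \<Rightarrow> 'a) \<Rightarrow> ('a \<Rightarrow> 'a) \<Rightarrow> ('a \<Rightarrow> 'a \<Rightarrow> 'a)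
    \<Rightarrow> ('a \<Rightarrow> nat \<Rightarrow> nat) \<Rightarrow> 'a \<Rightarrow> (nat \<Rightarrow> int) set" where
  "per_gens k Mor r s cmp d v = {(\<lambda>i. int (m i) - int (n i)) | m n.
      m \<in> Nk k \<and> n \<in> Nk k \<and>
      (\<forall>x\<in>Zcyl k Mor r s cmp d v. path_eq k (shift m x) (shift n x))}"

inductive_set gen_subgroup :: "(nat \<Rightarrow> int) set \<Rightarrow> (nat \<Rightarrow> int) set" for S where
  zero: "(\<lambda>_. 0) \<in> gen_subgroup S"
| gen: "g \<in> S \<Longrightarrow> g \<in> gen_subgroup S"
| diff: "a \<in> gen_subgroup S \<Longrightarrow> b \<in> gen_subgroup S \<Longrightarrow> (\<lambda>i. a i - b i) \<in> gen_subgroup S"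

definition Per :: "nat \<Rightarrow> 'a set \<Rightarrow> ('a \<Rightarrow> 'a) \<Rightarrow> ('a \<Rightarrow> 'a) \<Rightarrow> ('a \<Rightarrow> 'a \<Rightarrow> 'a)
    \<Rightarrow> ('a \<Rightarrow> nat \<Rightarrow> nat) \<Rightarrow> 'a \<Rightarrow> (nat \<Rightarrow> int) set" where
  "Per k Mor r s cmp d v = gen_subgroup (per_gens k Mor r s cmp d v)"

definition aperiodic :: "nat \<Rightarrow> 'a set \<Rightarrow> ('a \<Rightarrow> 'a) \<Rightarrow> ('a \<Rightarrow> 'a) \<Rightarrow> ('a \<Rightarrow> 'a \<Rightarrow> 'a)
    \<Rightarrow> ('a \<Rightarrow> nat \<Rightarrow> nat) \<Rightarrow> bool" where
  "aperiodic k Mor r s cmp d \<longleftrightarrow>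
     (\<forall>v\<in>vertices Mor d. Per k Mor r s cmp d v = {(\<lambda>_. 0)})"

end

theory Submission
  imports Defs "Jordan_Normal_Form.Spectral_Radius"
begin

lemma finite_eigs:
  fixes V :: "'a set" and M :: "'a \<Rightarrow> 'a \<Rightarrow> real"
  assumes fV: "finite V"
  shows "finite {c. mat_eigenvalue V M c}"
proof -
  obtain f where f: "bij_betw f {0..<card V} V" using ex_bij_betw_nat_finite[OF fV] by blast
  define n where "n = card V"
  define A where "A = mat n n (\<lambda>(i,j). complex_of_real (M (f i) (f j)))"
  have A: "A \<in> carrier_mat n n" by (simp add: A_def)
  have "{c. mat_eigenvalue V M c} \<subseteq> spectrum A"
  proof
    fix c assume "c \<in> {c. mat_eigenvalue V M c}"
    then obtain z where z: "\<exists>v\<in>V. z v \<noteq> 0" "\<forall>v\<in>V. (\<Sum>w\<in>V. complex_of_real (M v w) * z w) = c * z v"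
      unfolding mat_eigenvalue_def by blast
    define vz where "vz = vec n (\<lambda>i. z (f i))"
    have vzc: "vz \<in> carrier_vec n" by (simp add: vz_def)
    have nz: "vz \<noteq> 0\<^sub>v n"
    proof
      assume h: "vz = 0\<^sub>v n"
      obtain v where v: "v \<in> V" "z v \<noteq> 0" using z(1) by blast
      obtain i where i: "i < n" "f i = v" using f v(1) unfolding bij_betw_def n_def by (metis atLeastLessThan_iff imageE)
      have "vz $ i = 0" using h i by simp
      then show False using i v by (simp add: vz_def)
    qed
    have "A *\<^sub>v vz = c \<cdot>\<^sub>v vz"
    proof (rule eq_vecI)
      show "dim_vec (A *\<^sub>v vz) = dim_vec (c \<cdot>\<^sub>v vz)" using A by (simp add: vz_def)
      fix i assume "i < dim_vec (c \<cdot>\<^sub>v vz)"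
      then have i: "i < n" by (simp add: vz_def)
      have fi: "f i \<in> V" using f i unfolding bij_betw_def n_def by auto
      have "(A *\<^sub>v vz) $ i = (\<Sum>j = 0..<n. complex_of_real (M (f i) (f j)) * z (f j))"
        using i by (simp add: A_def vz_def scalar_prod_def)
      also have "\<dots> = (\<Sum>w\<in>V. complex_of_real (M (f i) w) * z w)"
        using sum.reindex_bij_betw[OF f[folded n_def], of "\<lambda>w. complex_of_real (M (f i) w) * z w"] by simp
      also have "\<dots> = c * z (f i)" using z(2) fi by blast
      finally show "(A *\<^sub>v vz) $ i = (c \<cdot>\<^sub>v vz) $ i" using i by (simp add: vz_def)
    qed
    then have "eigenvector A vz c" unfolding eigenvector_def using vzc nz A by simp
    then show "c \<in> spectrum A" unfolding spectrum_def eigenvalue_def by blast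
  qed
  then show ?thesis using card_finite_spectrum(1)[OF A] finite_subset by blast
qed

definition mv :: "'a set \<Rightarrow> ('a \<Rightarrow> 'a \<Rightarrow> real) \<Rightarrow> ('a \<Rightarrow> real) \<Rightarrow> 'a \<Rightarrow> real" where
  "mv V M h = (\<lambda>v. \<Sum>w\<in>V. M v w * h w)"

definition nonneg :: "'a set \<Rightarrow> ('a \<Rightarrow> 'a \<Rightarrow> real) \<Rightarrow> bool" where
  "nonneg V M \<longleftrightarrow> (\<forall>v\<in>V. \<forall>w\<in>V. 0 \<le> M v w)"

lemma mat_pow_nonneg: "nonneg V M \<Longrightarrow> v \<in> V \<Longrightarrow> w \<in> V \<Longrightarrow> 0 \<le> mat_pow V M n v w"
proof (induction n arbitrary: w)
  case 0 then show ?case by simp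
next
  case (Suc n) then show ?case by (auto simp: nonneg_def intro!: sum_nonneg)
qed

lemma mvp_mat: "finite V \<Longrightarrow> v \<in> V \<Longrightarrow> ((mv V M) ^^ n) f v = (\<Sum>x\<in>V. mat_pow V M n v x * f x)"
proof (induction n arbitrary: f)
  case 0
  have "(\<Sum>x\<in>V. (if v = x then 1 else 0) * f x) = (\<Sum>x\<in>V. if v = x then f x else 0)"
    by (intro sum.cong) auto
  also have "\<dots> = f v" using 0 by (simp add: sum.delta)
  finally show ?case by simp
next
  case (Suc n)
  have "((mv V M) ^^ Suc n) f v = ((mv V M) ^^ n) (mv V M f) v" by (simp only: funpow_Suc_right comp_def)
  also have "\<dots> = (\<Sum>x\<in>V. mat_pow V M n v x * mv V M f x)" by (rule Suc(1)[OF Suc(2,3)])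
  also have "\<dots> = (\<Sum>x\<in>V. mat_pow V M n v x * (\<Sum>u\<in>V. M x u * f u))" by (simp add: mv_def)
  also have "\<dots> = (\<Sum>u\<in>V. (\<Sum>x\<in>V. mat_pow V M n v x * M x u) * f u)"
  proof -
    have "(\<Sum>x\<in>V. mat_pow V M n v x * (\<Sum>u\<in>V. M x u * f u)) = (\<Sum>x\<in>V. \<Sum>u\<in>V. mat_pow V M n v x * M x u * f u)"
      by (simp add: sum_distrib_left mult.assoc)
    also have "\<dots> = (\<Sum>u\<in>V. \<Sum>x\<in>V. mat_pow V M n v x * M x u * f u)" by (rule sum.swap)
    also have "\<dots> = (\<Sum>u\<in>V. (\<Sum>x\<in>V. mat_pow V M n v x * M x u) * f u)" by (simp add: sum_distrib_right)
    finally show ?thesis .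
  qed
  finally show ?case by simp
qed

lemma zprop:
  assumes fin: "finite V" and nn: "nonneg V M" and irr: "irreducible_mat V M"
    and f0: "\<forall>v\<in>V. 0 \<le> f v" and fz: "\<forall>v\<in>V. f v = 0 \<longrightarrow> mv V M f v = 0"
    and v0: "v0 \<in> V" "f v0 = 0"
  shows "\<forall>x\<in>V. f x = 0"
proof -
  have step: "f x = 0" if "v \<in> V" "f v = 0" "x \<in> V" "M v x > 0" for v x
  proof -
    have "(\<Sum>w\<in>V. M v w * f w) = 0" using fz that by (simp add: mv_def)
    moreover have "\<forall>w\<in>V. 0 \<le> M v w * f w" using nn f0 that(1) by (auto simp: nonneg_def)
    ultimately have "\<forall>w\<in>V. M v w * f w = 0" using sum_nonneg_eq_0_iff[OF fin, of "\<lambda>w. M v w * f w"] by auto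
    then show ?thesis using that by auto
  qed
  have ind: "x \<in> V \<Longrightarrow> mat_pow V M n v0 x > 0 \<Longrightarrow> f x = 0" for n x
  proof (induction n arbitrary: x)
    case 0 then show ?case using v0 by (simp split: if_splits)
  next
    case (Suc n)
    have "\<exists>u\<in>V. mat_pow V M n v0 u * M u x > 0"
    proof (rule ccontr)
      assume "\<not> ?thesis"
      then have "(\<Sum>u\<in>V. mat_pow V M n v0 u * M u x) \<le> 0" by (intro sum_nonpos) auto
      then show False using Suc.prems by simp
    qed
    then obtain u where u: "u \<in> V" "mat_pow V M n v0 u * M u x > 0" by blast
    have a: "mat_pow V M n v0 u \<ge> 0" "M u x \<ge> 0" using mat_pow_nonneg[OF nn v0(1) u(1)] nn u(1) Suc.prems(1)
      by (auto simp: nonneg_def)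
    have "mat_pow V M n v0 u > 0" "M u x > 0" using u(2) a
      by (metis less_eq_real_def mult_eq_0_iff)+
    then show ?case using Suc.IH[OF u(1)] step u(1) Suc.prems(1) by blast
  qed
  show ?thesis
  proof
    fix x assume x: "x \<in> V"
    obtain n where "n \<ge> 1" "mat_pow V M n v0 x > 0" using irr v0(1) x unfolding irreducible_mat_def by blast
    then show "f x = 0" using ind x by blast
  qed
qed

lemma uniq_eig:
  assumes fin: "finite V" and ne: "V \<noteq> {}" and nn: "nonneg V M" and irr: "irreducible_mat V M"
    and u: "\<forall>v\<in>V. u v > 0" "\<forall>v\<in>V. mv V M u v = t * u v"
    and z: "\<forall>v\<in>V. mv V M z v = t * z v"
  shows "\<exists>c. \<forall>v\<in>V. z v = c * u v"
proof -
  define c where "c = Min ((\<lambda>v. z v / u v) ` V)"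
  have "c \<in> (\<lambda>v. z v / u v) ` V" unfolding c_def using fin ne by (intro Min_in) auto
  then obtain v0 where v0: "v0 \<in> V" "c = z v0 / u v0" by auto
  have cle: "c \<le> z v / u v" if "v \<in> V" for v using fin that unfolding c_def by auto
  define w where "w = (\<lambda>v. z v - c * u v)"
  have w0: "\<forall>v\<in>V. 0 \<le> w v"
  proof
    fix v assume v: "v \<in> V"
    have "c * u v \<le> z v" using cle[OF v] u(1) v by (simp add: pos_le_divide_eq)
    then show "0 \<le> w v" by (simp add: w_def)
  qed
  have "u v0 > 0" using u(1) v0(1) by auto
  then have wv0: "w v0 = 0" using v0 by (simp add: w_def)
  have mw: "mv V M w v = t * w v" if "v \<in> V" for v
  proof -
    have "mv V M w v = mv V M z v - c * mv V M u v"
      by (simp add: mv_def w_def right_diff_distrib sum_subtractf sum_distrib_left mult_ac)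
    then show ?thesis using u(2) z that by (simp add: w_def algebra_simps)
  qed
  have "\<forall>x\<in>V. w x = 0" by (rule zprop[OF fin nn irr w0 _ v0(1) wv0]) (use mw in auto)
  then show ?thesis by (auto simp: w_def)
qed

lemma spec_rad:
  assumes fin: "finite V" and ne: "V \<noteq> {}" and nn: "nonneg V M"
    and u: "\<forall>v\<in>V. u v > 0" "\<forall>v\<in>V. mv V M u v = t * u v"
  shows "spectral_radius_mat V M = t"
proof -
  obtain v1 where v1: "v1 \<in> V" using ne by blast
  have t0: "t \<ge> 0"
  proof -
    have "0 \<le> mv V M u v1" unfolding mv_def using nn u(1) v1 by (intro sum_nonneg mult_nonneg_nonneg) (auto simp: nonneg_def less_imp_le)
    then have "0 \<le> t * u v1" using u(2) v1 by simp
    moreover have "u v1 > 0" using u(1) v1 by auto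
    ultimately show ?thesis by (auto simp: zero_le_mult_iff)
  qed
  let ?E = "{c. mat_eigenvalue V M c}"
  have Seq: "{cmod c | c. mat_eigenvalue V M c} = cmod ` ?E" by auto
  have finS: "finite {cmod c | c. mat_eigenvalue V M c}" unfolding Seq using finite_eigs[OF fin] by simp
  have tE: "mat_eigenvalue V M (complex_of_real t)"
    unfolding mat_eigenvalue_def
  proof (intro exI[of _ "\<lambda>v. complex_of_real (u v)"] conjI ballI)
    show "\<exists>v\<in>V. complex_of_real (u v) \<noteq> 0" using v1 u(1) by force
    fix v assume v: "v \<in> V"
    have "(\<Sum>w\<in>V. complex_of_real (M v w) * complex_of_real (u w)) = complex_of_real (mv V M u v)"
      by (simp add: mv_def)
    then show "(\<Sum>w\<in>V. complex_of_real (M v w) * complex_of_real (u w)) = complex_of_real t * complex_of_real (u v)"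
      using u(2) v by simp
  qed
  have bound: "cmod c \<le> t" if c: "mat_eigenvalue V M c" for c
  proof -
    obtain z where z: "\<exists>v\<in>V. z v \<noteq> 0" "\<forall>v\<in>V. (\<Sum>w\<in>V. complex_of_real (M v w) * z w) = c * z v"
      using c unfolding mat_eigenvalue_def by blast
    define g where "g = (\<lambda>v. cmod (z v) / u v)"
    define G where "G = Max (g ` V)"
    have "G \<in> g ` V" unfolding G_def using fin ne by (intro Max_in) auto
    then obtain v0 where v0: "v0 \<in> V" "g v0 = G" by auto
    have gle: "g v \<le> G" if "v \<in> V" for v using fin that unfolding G_def by auto
    obtain v2 where v2: "v2 \<in> V" "z v2 \<noteq> 0" using z(1) by blast
    have "g v2 > 0" using v2 u(1) by (simp add: g_def)
    then have Gp: "G > 0" using gle[OF v2(1)] by simp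
    have "u v0 > 0" using v0 u(1) by auto
    then have ne: "u v0 \<noteq> 0" by simp
    have zv0: "cmod (z v0) = G * u v0" using nonzero_divide_eq_eq[OF ne] v0(2) unfolding g_def by blast
    have zw: "cmod (z w) \<le> G * u w" if "w \<in> V" for w
      using gle[OF that] u(1) that by (simp add: g_def pos_divide_le_eq)
    have "cmod c * cmod (z v0) = cmod (\<Sum>w\<in>V. complex_of_real (M v0 w) * z w)"
      using z(2) v0(1) by (simp add: norm_mult)
    also have "\<dots> \<le> (\<Sum>w\<in>V. cmod (complex_of_real (M v0 w) * z w))" by (rule norm_sum)
    also have "\<dots> = (\<Sum>w\<in>V. M v0 w * cmod (z w))"
      using nn v0(1) by (intro sum.cong refl) (simp add: norm_mult nonneg_def)
    also have "\<dots> \<le> (\<Sum>w\<in>V. M v0 w * (G * u w))"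
      using nn v0(1) zw by (intro sum_mono mult_left_mono) (auto simp: nonneg_def)
    also have "\<dots> = G * mv V M u v0" by (simp add: mv_def sum_distrib_left mult_ac)
    also have "\<dots> = t * cmod (z v0)" using u(2) v0(1) zv0 by simp
    finally have "cmod c * cmod (z v0) \<le> t * cmod (z v0)" .
    moreover have "cmod (z v0) > 0" using zv0 Gp u(1) v0(1) by simp
    ultimately show ?thesis by simp
  qed
  show ?thesis unfolding spectral_radius_mat_def
  proof (rule Max_eqI[OF finS])
    show "\<And>y. y \<in> {cmod c | c. mat_eigenvalue V M c} \<Longrightarrow> y \<le> t" using bound by auto
    show "t \<in> {cmod c | c. mat_eigenvalue V M c}" using tE t0 by force
  qed
qed

lemma bw_finite:
  fixes f :: "nat \<Rightarrow> 'a \<Rightarrow> real"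
  assumes "finite V" and "\<forall>j. \<forall>v\<in>V. \<bar>f j v\<bar> \<le> B"
  shows "\<exists>h L. strict_mono h \<and> (\<forall>v\<in>V. (\<lambda>j. f (h j) v) \<longlonglongrightarrow> L v)"
  using assms
proof (induction V rule: finite_induct)
  case empty
  show ?case by (rule exI[of _ id]) (auto simp: strict_mono_def)
next
  case (insert a F)
  then obtain h L where h: "strict_mono h" "\<forall>v\<in>F. (\<lambda>j. f (h j) v) \<longlonglongrightarrow> L v" by auto
  obtain r where r: "strict_mono r" "monoseq (\<lambda>n. f (h (r n)) a)"
    using seq_monosub[of "\<lambda>j. f (h j) a"] by blast
  have "Bseq (\<lambda>n. f (h (r n)) a)"
  proof (rule BseqI')
    fix n show "norm (f (h (r n)) a) \<le> B" using insert.prems by simp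
  qed
  then obtain l where l: "(\<lambda>n. f (h (r n)) a) \<longlonglongrightarrow> l"
    using Bseq_monoseq_convergent r(2) convergent_def by blast
  show ?case
  proof (intro exI conjI)
    show "strict_mono (h \<circ> r)" using h(1) r(1) by (rule strict_mono_o)
    show "\<forall>v\<in>insert a F. (\<lambda>j. f ((h \<circ> r) j) v) \<longlonglongrightarrow> (L(a := l)) v"
    proof
      fix v assume v: "v \<in> insert a F"
      show "(\<lambda>j. f ((h \<circ> r) j) v) \<longlonglongrightarrow> (L(a := l)) v"
      proof (cases "v = a")
        case True then show ?thesis using l by simp
      next
        case False
        then have "v \<in> F" using v by simp
        then have "((\<lambda>j. f (h j) v) \<circ> r) \<longlonglongrightarrow> L v" using h(2) LIMSEQ_subseq_LIMSEQ r(1) by blast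
        then show ?thesis using False by (simp add: comp_def)
      qed
    qed
  qed
qed

lemma rowpos:
  assumes fin: "finite V" and nn: "nonneg V M" and v: "v \<in> V"
  shows "w \<in> V \<Longrightarrow> n \<ge> 1 \<Longrightarrow> mat_pow V M n v w > 0 \<Longrightarrow> \<exists>u\<in>V. M v u > 0"
proof (induction n arbitrary: w)
  case 0 then show ?case by simp
next
  case (Suc n)
  show ?case
  proof (cases "n = 0")
    case True
    have "mat_pow V M (Suc n) v w = (\<Sum>u\<in>V. (if v = u then 1 else 0) * M u w)" using True by simp
    also have "\<dots> = (\<Sum>u\<in>V. if v = u then M u w else 0)" by (intro sum.cong) auto
    also have "\<dots> = M v w" using fin v by (simp add: sum.delta)
    finally show ?thesis using Suc.prems by auto
  next
    case False
    have "\<exists>u\<in>V. mat_pow V M n v u * M u w > 0"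
    proof (rule ccontr)
      assume "\<not> ?thesis"
      then have "(\<Sum>u\<in>V. mat_pow V M n v u * M u w) \<le> 0" by (intro sum_nonpos) auto
      then show False using Suc.prems by simp
    qed
    then obtain u where u: "u \<in> V" "mat_pow V M n v u * M u w > 0" by blast
    have "mat_pow V M n v u \<ge> 0" "M u w \<ge> 0" using mat_pow_nonneg[OF nn v u(1)] nn u(1) Suc.prems(1)
      by (auto simp: nonneg_def)
    then have "mat_pow V M n v u > 0" using u(2) by (metis less_eq_real_def mult_eq_0_iff)
    then show ?thesis using Suc.IH[OF u(1)] False by simp
  qed
qed

lemma pf_exists:
  assumes fin: "finite V" and ne: "V \<noteq> {}" and nn: "nonneg V M" and irr: "irreducible_mat V M"
  shows "\<exists>u t. t > 0 \<and> (\<forall>v\<in>V. u v > 0) \<and> (\<forall>v\<in>V. mv V M u v = t * u v)"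
proof -
  define S where "S = {x :: 'a \<Rightarrow> real. (\<forall>v\<in>V. 0 \<le> x v) \<and> (\<Sum>v\<in>V. x v) = 1}"
  define T where "T = {t. \<exists>x\<in>S. \<forall>v\<in>V. t * x v \<le> mv V M x v}"
  have mvnn: "0 \<le> mv V M x v" if "v \<in> V" "\<forall>w\<in>V. 0 \<le> x w" for x v
    unfolding mv_def using nn that by (intro sum_nonneg mult_nonneg_nonneg) (auto simp: nonneg_def)
  have cardpos: "card V > 0" using fin ne by (simp add: card_gt_0_iff)
  have x0S: "(\<lambda>v. 1 / real (card V)) \<in> S" using cardpos by (simp add: S_def)
  have T0: "0 \<in> T" using x0S mvnn unfolding T_def S_def by fastforce
  define R where "R = (\<Sum>v\<in>V. \<Sum>w\<in>V. M v w)"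
  have Tle: "t \<le> R" if t: "t \<in> T" for t
  proof -
    obtain x where x: "x \<in> S" "\<forall>v\<in>V. t * x v \<le> mv V M x v" using t unfolding T_def by blast
    have "Max (x ` V) \<in> x ` V" using fin ne by (intro Max_in) auto
    then obtain v0 where v0: "v0 \<in> V" "x v0 = Max (x ` V)" by auto
    have xle: "x w \<le> x v0" if "w \<in> V" for w using v0 fin that by auto
    have xpos: "x v0 > 0"
    proof (rule ccontr)
      assume "\<not> ?thesis"
      then have "(\<Sum>v\<in>V. x v) \<le> 0" using xle by (intro sum_nonpos) (meson not_less order_trans)
      then show False using x(1) by (simp add: S_def)
    qed
    have "t * x v0 \<le> mv V M x v0" using x(2) v0(1) by blast
    also have "\<dots> = (\<Sum>w\<in>V. M v0 w * x w)" by (simp add: mv_def)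
    also have "\<dots> \<le> (\<Sum>w\<in>V. M v0 w * x v0)"
      using nn v0(1) xle by (intro sum_mono mult_left_mono) (auto simp: nonneg_def)
    also have "\<dots> = (\<Sum>w\<in>V. M v0 w) * x v0" by (simp add: sum_distrib_right)
    also have "(\<Sum>w\<in>V. M v0 w) \<le> R"
      unfolding R_def using fin v0(1) nn
      by (intro member_le_sum[of v0 V "\<lambda>v. \<Sum>w\<in>V. M v w"]) (auto simp: nonneg_def intro!: sum_nonneg)
    then have "(\<Sum>w\<in>V. M v0 w) * x v0 \<le> R * x v0" using xpos by (intro mult_right_mono) auto
    finally show "t \<le> R" using xpos by simp
  qed
  have bdd: "bdd_above T" using Tle by (auto simp: bdd_above_def)
  define ts where "ts = Sup T"
  have tsT: "t \<le> ts" if "t \<in> T" for t unfolding ts_def using bdd that by (rule cSup_upper[rotated])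
  have "\<forall>j. \<exists>t. t \<in> T \<and> ts - inverse (real (Suc j)) < t"
  proof
    fix j
    have "ts - inverse (real (Suc j)) < Sup T" unfolding ts_def by simp
    then show "\<exists>t. t \<in> T \<and> ts - inverse (real (Suc j)) < t" using less_cSupD[of T] T0 by blast
  qed
  then obtain tt where tt: "\<forall>j. tt j \<in> T \<and> ts - inverse (real (Suc j)) < tt j" by metis
  have "\<forall>j. \<exists>x. x \<in> S \<and> (\<forall>v\<in>V. tt j * x v \<le> mv V M x v)" using tt unfolding T_def by blast
  then obtain xx where xx: "\<forall>j. xx j \<in> S \<and> (\<forall>v\<in>V. tt j * xx j v \<le> mv V M (xx j) v)" by metis
  have xxb: "\<forall>j. \<forall>v\<in>V. \<bar>xx j v\<bar> \<le> 1"
  proof (intro allI ballI)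
    fix j v assume v: "v \<in> V"
    have "xx j \<in> S" using xx by blast
    then have a: "\<forall>w\<in>V. 0 \<le> xx j w" "(\<Sum>w\<in>V. xx j w) = 1" by (auto simp: S_def)
    have "xx j v \<le> (\<Sum>w\<in>V. xx j w)" using fin v a(1) by (intro member_le_sum) auto
    then show "\<bar>xx j v\<bar> \<le> 1" using a v by auto
  qed
  obtain h L where h: "strict_mono h" "\<forall>v\<in>V. (\<lambda>j. xx (h j) v) \<longlonglongrightarrow> L v"
    using bw_finite[OF fin xxb] by blast
  have xxS: "\<forall>w\<in>V. 0 \<le> xx j w" "(\<Sum>w\<in>V. xx j w) = 1" for j using xx by (auto simp: S_def)
  have L0: "\<forall>v\<in>V. 0 \<le> L v"
  proof
    fix v assume v: "v \<in> V"
    show "0 \<le> L v" using h(2) v xxS(1) by (intro LIMSEQ_le_const[of "\<lambda>j. xx (h j) v"]) auto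
  qed
  have "(\<lambda>j. \<Sum>v\<in>V. xx (h j) v) \<longlonglongrightarrow> (\<Sum>v\<in>V. L v)" using h(2) by (intro tendsto_sum) auto
  then have L1: "(\<Sum>v\<in>V. L v) = 1" using xxS(2) LIMSEQ_unique[OF _ tendsto_const] by simp
  have LS: "L \<in> S" using L0 L1 by (simp add: S_def)
  define e where "e = (\<lambda>j. inverse (real (Suc (h j))))"
  have e0: "e \<longlonglongrightarrow> 0" unfolding e_def using LIMSEQ_subseq_LIMSEQ[OF LIMSEQ_inverse_real_of_nat h(1)]
    by (simp add: comp_def)
  have LT: "\<forall>v\<in>V. ts * L v \<le> mv V M L v"
  proof
    fix v assume v: "v \<in> V"
    have lim: "(\<lambda>j. mv V M (xx (h j)) v - (ts - e j) * xx (h j) v) \<longlonglongrightarrow> mv V M L v - (ts - 0) * L v"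
      unfolding mv_def using h(2) v e0 by (intro tendsto_intros) auto
    have "0 \<le> mv V M (xx (h j)) v - (ts - e j) * xx (h j) v" for j
    proof -
      have "(ts - e j) * xx (h j) v \<le> tt (h j) * xx (h j) v"
        using tt xxS(1) v unfolding e_def by (intro mult_right_mono) (auto simp: less_imp_le)
      also have "\<dots> \<le> mv V M (xx (h j)) v" using xx v by blast
      finally show ?thesis by simp
    qed
    then have "0 \<le> mv V M L v - (ts - 0) * L v" by (intro LIMSEQ_le_const[OF lim]) auto
    then show "ts * L v \<le> mv V M L v" by simp
  qed
  have "\<forall>p\<in>V \<times> V. \<exists>n. n \<ge> 1 \<and> mat_pow V M n (fst p) (snd p) > 0"
    using irr unfolding irreducible_mat_def by auto
  then obtain Nf where Nf: "\<forall>p\<in>V \<times> V. Nf p \<ge> 1 \<and> mat_pow V M (Nf p) (fst p) (snd p) > 0"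
    by (metis bchoice)
  define J where "J = Max (Nf ` (V \<times> V))"
  have NJ: "Nf (v, x) \<le> J" if "v \<in> V" "x \<in> V" for v x
    unfolding J_def using fin that by (intro Max_ge) auto
  define Pop where "Pop = (\<lambda>f v. \<Sum>j\<le>J. ((mv V M) ^^ j) f v)"
  have Pexp: "Pop f v = (\<Sum>j\<le>J. \<Sum>x\<in>V. mat_pow V M j v x * f x)" if "v \<in> V" for f v
    unfolding Pop_def using mvp_mat[OF fin that] by simp
  have Ppos: "Pop f v > 0" if f0: "\<forall>w\<in>V. 0 \<le> f w" and x0: "x0 \<in> V" "f x0 > 0" and v: "v \<in> V" for f x0 v
  proof -
    let ?g = "\<lambda>j. \<Sum>x\<in>V. mat_pow V M j v x * f x"
    have gnn: "0 \<le> ?g j" for j using f0 mat_pow_nonneg[OF nn v] by (intro sum_nonneg mult_nonneg_nonneg) auto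
    have "mat_pow V M (Nf (v, x0)) v x0 * f x0 \<le> ?g (Nf (v, x0))"
      using fin x0 f0 mat_pow_nonneg[OF nn v] by (intro member_le_sum[of x0 V "\<lambda>x. mat_pow V M (Nf (v, x0)) v x * f x"]) auto
    also have "\<dots> \<le> (\<Sum>j\<le>J. ?g j)"
      using NJ[OF v x0(1)] gnn by (intro member_le_sum) auto
    finally have "mat_pow V M (Nf (v, x0)) v x0 * f x0 \<le> Pop f v" using Pexp[OF v] by simp
    moreover have "mat_pow V M (Nf (v, x0)) v x0 * f x0 > 0" using Nf v x0 by auto
    ultimately show ?thesis by simp
  qed
  have Plin: "Pop (\<lambda>w. f w - c * g w) v = Pop f v - c * Pop g v" if "v \<in> V" for f g c v
    unfolding Pexp[OF that] by (simp add: right_diff_distrib sum_subtractf sum_distrib_left mult_ac)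
  have Pcomm: "mv V M (Pop f) v = Pop (mv V M f) v" for f v
  proof -
    have "mv V M (Pop f) v = (\<Sum>w\<in>V. \<Sum>j\<le>J. M v w * ((mv V M) ^^ j) f w)"
      by (simp add: mv_def Pop_def sum_distrib_left)
    also have "\<dots> = (\<Sum>j\<le>J. \<Sum>w\<in>V. M v w * ((mv V M) ^^ j) f w)" by (rule sum.swap)
    also have "\<dots> = (\<Sum>j\<le>J. mv V M (((mv V M) ^^ j) f) v)" by (simp add: mv_def)
    also have "\<dots> = (\<Sum>j\<le>J. ((mv V M) ^^ j) (mv V M f) v)" by (simp only: funpow_swap1)
    finally show ?thesis by (simp add: Pop_def)
  qed
  have EQ: "\<forall>v\<in>V. mv V M L v = ts * L v"
  proof (rule ccontr)
    assume "\<not> ?thesis"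
    then obtain v0 where v0: "v0 \<in> V" "ts * L v0 < mv V M L v0" using LT by force
    define w where "w = (\<lambda>v. mv V M L v - ts * L v)"
    have w0: "\<forall>v\<in>V. 0 \<le> w v" using LT by (simp add: w_def)
    have wv0: "w v0 > 0" using v0 by (simp add: w_def)
    obtain x0 where x0: "x0 \<in> V" "L x0 > 0"
    proof (rule ccontr)
      assume "\<not> thesis"
      then have "\<forall>x\<in>V. L x \<le> 0" using that by force
      then have "(\<Sum>v\<in>V. L v) \<le> 0" by (intro sum_nonpos) auto
      then show False using L1 by simp
    qed
    define z where "z = Pop L"
    have zpos: "\<forall>v\<in>V. z v > 0" using Ppos[OF L0 x0] by (simp add: z_def)
    have Pwpos: "\<forall>v\<in>V. Pop w v > 0" using Ppos[OF w0 v0(1) wv0] by simp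
    have zdiff: "mv V M z v - ts * z v = Pop w v" if "v \<in> V" for v
      unfolding z_def Pcomm w_def using Plin[OF that] by simp
    define \<epsilon> where "\<epsilon> = Min ((\<lambda>v. Pop w v / z v) ` V)"
    have epos: "\<epsilon> > 0" unfolding \<epsilon>_def using fin ne Pwpos zpos by (subst Min_gr_iff) auto
    have ele: "\<epsilon> * z v \<le> Pop w v" if "v \<in> V" for v
    proof -
      have "\<epsilon> \<le> Pop w v / z v" unfolding \<epsilon>_def using fin that by auto
      then show ?thesis using zpos that by (simp add: pos_le_divide_eq)
    qed
    have zineq: "(ts + \<epsilon>) * z v \<le> mv V M z v" if "v \<in> V" for v
      using ele[OF that] zdiff[OF that] by (simp add: distrib_right)
    define c where "c = (\<Sum>v\<in>V. z v)"
    have cpos: "c > 0" unfolding c_def using fin ne zpos by (intro sum_pos) auto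
    define x' where "x' = (\<lambda>v. z v / c)"
    have x'S: "x' \<in> S" unfolding S_def x'_def using zpos cpos
      by (auto simp: sum_divide_distrib[symmetric] c_def less_imp_le)
    have mvx': "mv V M x' v = mv V M z v / c" for v
      by (simp add: mv_def x'_def sum_divide_distrib)
    have "\<forall>v\<in>V. (ts + \<epsilon>) * x' v \<le> mv V M x' v"
    proof
      fix v assume v: "v \<in> V"
      have "(ts + \<epsilon>) * z v / c \<le> mv V M z v / c" using zineq[OF v] cpos by (intro divide_right_mono) auto
      moreover have "(ts + \<epsilon>) * x' v = (ts + \<epsilon>) * z v / c" by (simp add: x'_def)
      ultimately show "(ts + \<epsilon>) * x' v \<le> mv V M x' v" unfolding mvx' by simp
    qed
    then have "ts + \<epsilon> \<in> T" using x'S unfolding T_def by blast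
    then have "ts + \<epsilon> \<le> ts" by (rule tsT)
    then show False using epos by simp
  qed
  have Lpos: "\<forall>v\<in>V. L v > 0"
  proof (rule ccontr)
    assume "\<not> ?thesis"
    then obtain v0 where v0: "v0 \<in> V" "L v0 = 0" using L0 by force
    have "\<forall>x\<in>V. L x = 0" by (rule zprop[OF fin nn irr L0 _ v0]) (use EQ in auto)
    then show False using L1 by simp
  qed
  obtain v1 where v1: "v1 \<in> V" using ne by blast
  obtain n where n: "n \<ge> 1" "mat_pow V M n v1 v1 > 0" using irr v1 unfolding irreducible_mat_def by blast
  obtain u where u: "u \<in> V" "M v1 u > 0" using rowpos[OF fin nn v1 v1 n] by blast
  have "M v1 u * L u \<le> mv V M L v1"
    unfolding mv_def using fin u L0 nn v1 by (intro member_le_sum[of u V "\<lambda>w. M v1 w * L w"]) (auto simp: nonneg_def)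
  moreover have "M v1 u * L u > 0" using u Lpos by simp
  ultimately have "ts * L v1 > 0" using EQ v1 by simp
  moreover have "L v1 > 0" using Lpos v1 by blast
  ultimately have "ts > 0" by (simp add: zero_less_mult_iff)
  then show ?thesis using Lpos EQ by blast
qed

locale KG =
  fixes k :: nat and Mor :: "'a set" and r s :: "'a \<Rightarrow> 'a" and cmp :: "'a \<Rightarrow> 'a \<Rightarrow> 'a"
    and d :: "'a \<Rightarrow> nat \<Rightarrow> nat"
  assumes kg: "kgraph k Mor r s cmp d"
begin

lemma rM: "l \<in> Mor \<Longrightarrow> r l \<in> Mor" and sM: "l \<in> Mor \<Longrightarrow> s l \<in> Mor"
  and dr: "l \<in> Mor \<Longrightarrow> d (r l) = (\<lambda>_. 0)" and ds: "l \<in> Mor \<Longrightarrow> d (s l) = (\<lambda>_. 0)"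
  using kg unfolding kgraph_def by auto

lemma vert_rs: "v \<in> Mor \<Longrightarrow> d v = (\<lambda>_. 0) \<Longrightarrow> r v = v \<and> s v = v"
  using kg unfolding kgraph_def by auto

lemma cmp_r: "l \<in> Mor \<Longrightarrow> cmp (r l) l = l" and cmp_s: "l \<in> Mor \<Longrightarrow> cmp l (s l) = l"
  using kg unfolding kgraph_def by auto

lemma cmpM: "a \<in> Mor \<Longrightarrow> b \<in> Mor \<Longrightarrow> s a = r b \<Longrightarrow> cmp a b \<in> Mor"
  and cmp_rr: "a \<in> Mor \<Longrightarrow> b \<in> Mor \<Longrightarrow> s a = r b \<Longrightarrow> r (cmp a b) = r a"
  and cmp_ss: "a \<in> Mor \<Longrightarrow> b \<in> Mor \<Longrightarrow> s a = r b \<Longrightarrow> s (cmp a b) = s b"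
  and cmp_d: "a \<in> Mor \<Longrightarrow> b \<in> Mor \<Longrightarrow> s a = r b \<Longrightarrow> d (cmp a b) = (\<lambda>i. d a i + d b i)"
  using kg unfolding kgraph_def by auto

lemma assoc: "a \<in> Mor \<Longrightarrow> b \<in> Mor \<Longrightarrow> c \<in> Mor \<Longrightarrow> s a = r b \<Longrightarrow> s b = r c \<Longrightarrow>
   cmp (cmp a b) c = cmp a (cmp b c)"
  using kg unfolding kgraph_def by blast

lemma dNk: "l \<in> Mor \<Longrightarrow> d l \<in> Nk k"
  using kg unfolding kgraph_def by auto

lemma ufac: "l \<in> Mor \<Longrightarrow> m \<in> Nk k \<Longrightarrow> n \<in> Nk k \<Longrightarrow> d l = (\<lambda>i. m i + n i) \<Longrightarrow>
        (\<exists>!p. fst p \<in> Mor \<and> snd p \<in> Mor \<and> s (fst p) = r (snd p) \<and>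
              l = cmp (fst p) (snd p) \<and> d (fst p) = m \<and> d (snd p) = n)"
  using kg unfolding kgraph_def by blast

definition FP :: "'a \<Rightarrow> (nat \<Rightarrow> nat) \<Rightarrow> 'a \<times> 'a" where
  "FP l m = (THE p. fst p \<in> Mor \<and> snd p \<in> Mor \<and> s (fst p) = r (snd p) \<and>
              l = cmp (fst p) (snd p) \<and> d (fst p) = m \<and> d (snd p) = (\<lambda>i. d l i - m i))"

definition pre where "pre l m = fst (FP l m)"
definition post where "post l m = snd (FP l m)"

lemma Nk_sub: "a \<in> Nk k \<Longrightarrow> (\<lambda>i. a i - b i) \<in> Nk k"
  by (auto simp: Nk_def)
lemma Nk_add: "a \<in> Nk k \<Longrightarrow> b \<in> Nk k \<Longrightarrow> (\<lambda>i. a i + b i) \<in> Nk k"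
  by (auto simp: Nk_def)
lemma Nk_le: "a \<in> Nk k \<Longrightarrow> b \<le> a \<Longrightarrow> b \<in> Nk k"
  by (auto simp: Nk_def le_fun_def) (metis le_zero_eq)

lemma fac:
  assumes "l \<in> Mor" "m \<le> d l"
  shows "pre l m \<in> Mor \<and> post l m \<in> Mor \<and> s (pre l m) = r (post l m) \<and>
         l = cmp (pre l m) (post l m) \<and> d (pre l m) = m \<and> d (post l m) = (\<lambda>i. d l i - m i)"
proof -
  have m: "m \<in> Nk k" using Nk_le[OF dNk[OF assms(1)] assms(2)] .
  have n: "(\<lambda>i. d l i - m i) \<in> Nk k" using Nk_sub[OF dNk[OF assms(1)]] .
  have e: "d l = (\<lambda>i. m i + (d l i - m i))" using assms(2) by (auto simp: le_fun_def)
  from theI'[OF ufac[OF assms(1) m n e]] show ?thesis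
    unfolding pre_def post_def FP_def .
qed

lemma fac_uniq:
  assumes "a \<in> Mor" "b \<in> Mor" "s a = r b"
  shows "pre (cmp a b) (d a) = a \<and> post (cmp a b) (d a) = b"
proof -
  let ?l = "cmp a b"
  have l: "?l \<in> Mor" using cmpM assms by auto
  have dl: "d ?l = (\<lambda>i. d a i + d b i)" using cmp_d assms by auto
  have db: "(\<lambda>i. d ?l i - d a i) = d b" using dl by auto
  have U: "\<exists>!p. fst p \<in> Mor \<and> snd p \<in> Mor \<and> s (fst p) = r (snd p) \<and>
              ?l = cmp (fst p) (snd p) \<and> d (fst p) = d a \<and> d (snd p) = d b"
    using ufac[OF l dNk[OF assms(1)] dNk[OF assms(2)] dl] .
  have "FP ?l (d a) = (a, b)"
    unfolding FP_def db
    by (rule the1_equality[OF U]) (use assms in auto)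
  then show ?thesis by (simp add: pre_def post_def)
qed

lemma fac_uniq':
  assumes "a \<in> Mor" "b \<in> Mor" "s a = r b" "l = cmp a b" "m = d a"
  shows "pre l m = a" "post l m = b"
  using fac_uniq[OF assms(1-3)] assms(4,5) by auto

end

context KG begin

lemma pre_r: "pre l m \<in> Mor \<Longrightarrow> post l m \<in> Mor \<Longrightarrow> s (pre l m) = r (post l m) \<Longrightarrow>
   l = cmp (pre l m) (post l m) \<Longrightarrow> r (pre l m) = r l \<and> s (post l m) = s l"
  using cmp_rr cmp_ss by metis

lemma fac_rs: assumes "l \<in> Mor" "m \<le> d l" shows "r (pre l m) = r l" "s (post l m) = s l"
  using fac[OF assms] pre_r by blast+

lemma zero_le: "(\<lambda>_. 0::nat) \<le> f" by (simp add: le_fun_def)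

lemma pre0: assumes "l \<in> Mor" shows "pre l (\<lambda>_. 0) = r l" "post l (\<lambda>_. 0) = l"
proof -
  have "r l \<in> Mor" "s (r l) = r l" using rM[OF assms] vert_rs[OF rM[OF assms] dr[OF assms]] by auto
  then show "pre l (\<lambda>_. 0) = r l" "post l (\<lambda>_. 0) = l"
    using fac_uniq'[of "r l" l l "\<lambda>_. 0"] assms cmp_r dr by auto
qed

lemma pre_full: assumes "l \<in> Mor" shows "pre l (d l) = l" "post l (d l) = s l"
proof -
  have "s l \<in> Mor" "r (s l) = s l" using sM[OF assms] vert_rs[OF sM[OF assms] ds[OF assms]] by auto
  then show "pre l (d l) = l" "post l (d l) = s l"
    using fac_uniq'[of l "s l" l "d l"] assms cmp_s by auto
qed

lemma pre_cmp:
  assumes a: "a \<in> Mor" and b: "b \<in> Mor" and ab: "s a = r b" and c: "c \<le> d a"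
  shows "pre (cmp a b) c = pre a c" "post (cmp a b) c = cmp (post a c) b"
proof -
  note F = fac[OF a c]
  have sp: "s (post a c) = s a" using fac_rs[OF a c] by auto
  have e: "cmp a b = cmp (pre a c) (cmp (post a c) b)"
    using assoc[of "pre a c" "post a c" b] F b ab sp by auto
  have m: "cmp (post a c) b \<in> Mor" using cmpM F b ab sp by auto
  have r': "r (cmp (post a c) b) = r (post a c)" using cmp_rr F b ab sp by auto
  show "pre (cmp a b) c = pre a c" "post (cmp a b) c = cmp (post a c) b"
    using fac_uniq'[OF _ m _ e] F r' by auto
qed

lemma pre_add:
  assumes t: "t \<in> Mor" and ce: "(\<lambda>i. c i + e i) \<le> d t"
  shows "pre t (\<lambda>i. c i + e i) = cmp (pre t c) (pre (post t c) e)"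
        "post t (\<lambda>i. c i + e i) = post (post t c) e"
proof -
  have c: "c \<le> d t" using ce by (auto simp: le_fun_def) (metis add_leE)
  note F = fac[OF t c]
  have e: "e \<le> d (post t c)" using ce F by (auto simp: le_fun_def) (metis add_diff_cancel_left' diff_le_mono)
  note G = fac[OF _ e] F
  have rr: "r (pre (post t c) e) = r (post t c)" using fac_rs[OF _ e] F by auto
  have eq: "t = cmp (cmp (pre t c) (pre (post t c) e)) (post (post t c) e)"
    using assoc[of "pre t c" "pre (post t c) e" "post (post t c) e"] G rr by auto
  have m: "cmp (pre t c) (pre (post t c) e) \<in> Mor" using cmpM G rr by auto
  have dd: "d (cmp (pre t c) (pre (post t c) e)) = (\<lambda>i. c i + e i)" using cmp_d G rr by auto
  have ss: "s (cmp (pre t c) (pre (post t c) e)) = r (post (post t c) e)" using cmp_ss G rr by auto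
  show "pre t (\<lambda>i. c i + e i) = cmp (pre t c) (pre (post t c) e)"
        "post t (\<lambda>i. c i + e i) = post (post t c) e"
    using fac_uniq'[OF m _ ss eq dd[symmetric]] G by auto
qed

definition seg where "seg l a b = pre (post l a) (\<lambda>i. b i - a i)"

lemma seg_props:
  assumes l: "l \<in> Mor" and ab: "a \<le> b" and bp: "b \<le> p" and pl: "p \<le> d l"
  shows "seg l a b \<in> Mor" "d (seg l a b) = (\<lambda>i. b i - a i)"
        "s (seg l a b) = r (seg l b p)" "seg l a p = cmp (seg l a b) (seg l b p)"
proof -
  have a: "a \<le> d l" using ab bp pl order_trans by blast
  note F = fac[OF l a]
  let ?t = "post l a"
  have b1: "(\<lambda>i. b i - a i) \<le> d ?t" using F bp pl ab by (auto simp: le_fun_def intro: diff_le_mono order_trans)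
  have b2: "(\<lambda>i. (b i - a i) + (p i - b i)) \<le> d ?t" using F bp pl ab
    by (auto simp: le_fun_def) (metis diff_le_mono le_add_diff_inverse le_trans)
  have e1: "(\<lambda>i. (b i - a i) + (p i - b i)) = (\<lambda>i. p i - a i)" using ab bp by (auto simp: le_fun_def fun_eq_iff)
  have e2: "(\<lambda>i. a i + (b i - a i)) = b" using ab by (auto simp: le_fun_def fun_eq_iff)
  have b3: "(\<lambda>i. a i + (b i - a i)) \<le> d l" using e2 bp pl by auto
  have pb: "post l b = post ?t (\<lambda>i. b i - a i)" using pre_add(2)[OF l b3] e2 by simp
  have G: "pre ?t (\<lambda>i. b i - a i) \<in> Mor \<and> post ?t (\<lambda>i. b i - a i) \<in> Mor \<and>
      s (pre ?t (\<lambda>i. b i - a i)) = r (post ?t (\<lambda>i. b i - a i)) \<and>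
      d (pre ?t (\<lambda>i. b i - a i)) = (\<lambda>i. b i - a i)" using fac[OF _ b1] F by auto
  have pp: "(\<lambda>i. p i - b i) \<le> d (post ?t (\<lambda>i. b i - a i))"
    using fac[OF _ b1] F bp pl ab by (auto simp: le_fun_def intro: diff_le_mono)
  show "seg l a b \<in> Mor" "d (seg l a b) = (\<lambda>i. b i - a i)" using G by (auto simp: seg_def)
  show "s (seg l a b) = r (seg l b p)"
    using G fac_rs(1)[OF _ pp] unfolding seg_def pb by auto
  show "seg l a p = cmp (seg l a b) (seg l b p)"
    unfolding seg_def pb using pre_add(1)[OF _ b2] e1 F by auto
qed

lemma seg_cmp:
  assumes a: "l \<in> Mor" and b: "\<alpha> \<in> Mor" and ab: "s l = r \<alpha>" and c: "x \<le> y" "y \<le> d l"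
  shows "seg (cmp l \<alpha>) x y = seg l x y"
proof -
  have x: "x \<le> d l" using c order_trans by blast
  have "post (cmp l \<alpha>) x = cmp (post l x) \<alpha>" using pre_cmp(2)[OF a b ab x] .
  moreover have "(\<lambda>i. y i - x i) \<le> d (post l x)" using fac[OF a x] c by (auto simp: le_fun_def intro: diff_le_mono)
  moreover have "s (post l x) = r \<alpha>" using fac_rs[OF a x] ab by auto
  ultimately show ?thesis unfolding seg_def using pre_cmp(1) fac[OF a x] b by auto
qed

lemma seg00: "l \<in> Mor \<Longrightarrow> seg l (\<lambda>_. 0) (\<lambda>_. 0) = r l"
  unfolding seg_def using pre0 by simp

lemma seg0d: "l \<in> Mor \<Longrightarrow> seg l (\<lambda>_. 0) (d l) = l"
  unfolding seg_def using pre0 pre_full by simp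

end

context KG begin

definition nosrc where
  "nosrc \<longleftrightarrow> (\<forall>w\<in>Mor. d w = (\<lambda>_. 0) \<longrightarrow> (\<forall>i<k. \<exists>e\<in>Mor. r e = w \<and> d e = unitvec i))"

lemma ext_exists:
  assumes ns: nosrc
  shows "w \<in> Mor \<Longrightarrow> d w = (\<lambda>_. 0) \<Longrightarrow> p \<in> Nk k \<Longrightarrow> \<exists>\<alpha>\<in>Mor. r \<alpha> = w \<and> d \<alpha> = p"
proof (induction "\<Sum>i<k. p i" arbitrary: p)
  case 0
  then have z: "\<forall>i<k. p i = 0" by simp
  have "p = (\<lambda>_. 0)"
  proof
    fix i show "p i = 0" using z 0(4) by (cases "i < k") (auto simp: Nk_def)
  qed
  then show ?case using 0 vert_rs by auto
next
  case (Suc n)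
  have "\<exists>i<k. p i \<noteq> 0"
  proof (rule ccontr)
    assume "\<not> (\<exists>i<k. p i \<noteq> 0)"
    then have "(\<Sum>i<k. p i) = 0" by simp
    with Suc.hyps(2) show False by simp
  qed
  then obtain i where i: "i < k" "p i > 0" by blast
  define p' where "p' = p(i := p i - 1)"
  have p'Nk: "p' \<in> Nk k" using Suc.prems(3) i by (auto simp: Nk_def p'_def)
  have "(\<Sum>j<k. p j) = (\<Sum>j<k. p' j) + 1"
  proof -
    have "(\<Sum>j<k. p j) = p i + (\<Sum>j\<in>{..<k}-{i}. p j)" using i by (simp add: sum.remove)
    moreover have "(\<Sum>j<k. p' j) = p' i + (\<Sum>j\<in>{..<k}-{i}. p' j)" using i by (simp add: sum.remove)
    moreover have "(\<Sum>j\<in>{..<k}-{i}. p' j) = (\<Sum>j\<in>{..<k}-{i}. p j)" by (auto simp: p'_def)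
    ultimately show ?thesis using i by (simp add: p'_def)
  qed
  then have "n = (\<Sum>j<k. p' j)" using Suc.hyps(2) by simp
  from Suc.hyps(1)[OF this Suc.prems(1,2) p'Nk] obtain \<alpha>' where a': "\<alpha>' \<in> Mor" "r \<alpha>' = w" "d \<alpha>' = p'" by blast
  obtain e where e: "e \<in> Mor" "r e = s \<alpha>'" "d e = unitvec i"
    using ns sM[OF a'(1)] ds[OF a'(1)] i unfolding nosrc_def by blast
  have "cmp \<alpha>' e \<in> Mor" "r (cmp \<alpha>' e) = w" "d (cmp \<alpha>' e) = p"
    using cmpM cmp_rr cmp_d a' e i by (auto simp: p'_def unitvec_def fun_eq_iff)
  then show ?case by blast
qed

definition one :: "nat \<Rightarrow> nat" where "one = (\<lambda>i. if i < k then 1 else 0)"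

lemma one_Nk: "one \<in> Nk k" by (auto simp: one_def Nk_def)

definition nxt where "nxt l = (SOME l'. \<exists>\<alpha>\<in>Mor. r \<alpha> = s l \<and> d \<alpha> = one \<and> l' = cmp l \<alpha>)"

definition chain where "chain \<eta> j = (nxt ^^ j) \<eta>"

lemma nxt_props:
  assumes ns: nosrc and l: "l \<in> Mor"
  shows "\<exists>\<alpha>\<in>Mor. r \<alpha> = s l \<and> d \<alpha> = one \<and> nxt l = cmp l \<alpha>"
proof -
  have "\<exists>\<alpha>\<in>Mor. r \<alpha> = s l \<and> d \<alpha> = one" using ext_exists[OF ns sM[OF l] ds[OF l] one_Nk] .
  then have "\<exists>l'. \<exists>\<alpha>\<in>Mor. r \<alpha> = s l \<and> d \<alpha> = one \<and> l' = cmp l \<alpha>" by blast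
  from someI_ex[OF this] show ?thesis unfolding nxt_def .
qed

lemma chain_props:
  assumes ns: nosrc and e: "\<eta> \<in> Mor"
  shows "chain \<eta> j \<in> Mor \<and> d (chain \<eta> j) = (\<lambda>i. d \<eta> i + j * one i) \<and> r (chain \<eta> j) = r \<eta>"
proof (induction j)
  case 0 then show ?case using e by (simp add: chain_def)
next
  case (Suc j)
  obtain \<alpha> where a: "\<alpha>\<in>Mor" "r \<alpha> = s (chain \<eta> j)" "d \<alpha> = one" "nxt (chain \<eta> j) = cmp (chain \<eta> j) \<alpha>"
    using nxt_props[OF ns] Suc by blast
  have ch: "chain \<eta> (Suc j) = nxt (chain \<eta> j)" by (simp add: chain_def)
  show ?case unfolding ch a(4) using Suc a cmpM cmp_d cmp_rr by auto
qed

lemma chain_seg_step: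
  assumes ns: nosrc and e: "\<eta> \<in> Mor" and xb: "x \<le> b" "b \<le> d (chain \<eta> j)"
  shows "seg (chain \<eta> (Suc j)) x b = seg (chain \<eta> j) x b"
proof -
  obtain \<alpha> where a: "\<alpha>\<in>Mor" "r \<alpha> = s (chain \<eta> j)" "d \<alpha> = one" "nxt (chain \<eta> j) = cmp (chain \<eta> j) \<alpha>"
    using nxt_props[OF ns] chain_props[OF ns e] by blast
  have ch: "chain \<eta> (Suc j) = nxt (chain \<eta> j)" by (simp add: chain_def)
  show ?thesis unfolding ch a(4) using seg_cmp[OF _ a(1) _ xb] chain_props[OF ns e] a by auto
qed

lemma chain_seg:
  assumes ns: nosrc and e: "\<eta> \<in> Mor" and jj: "j \<le> j'" and xb: "x \<le> b" "b \<le> d (chain \<eta> j)"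
  shows "seg (chain \<eta> j') x b = seg (chain \<eta> j) x b"
  using jj
proof (induction j' rule: dec_induct)
  case base then show ?case by simp
next
  case (step j')
  have "d (chain \<eta> j) \<le> d (chain \<eta> j')" using step(1) chain_props[OF ns e]
    by (auto simp: le_fun_def intro: mult_le_mono1)
  then have "b \<le> d (chain \<eta> j')" using xb(2) by (rule order_trans[rotated])
  then show ?case using chain_seg_step[OF ns e xb(1)] step by auto
qed

definition zpath where "zpath \<eta> a b = seg (chain \<eta> (\<Sum>i<k. b i)) a b"

lemma le_chain: assumes ns: nosrc and e: "\<eta> \<in> Mor" and p: "p \<in> Nk k" and j: "(\<Sum>i<k. p i) \<le> j"
  shows "p \<le> d (chain \<eta> j)"
proof -
  have "p i \<le> d \<eta> i + j * one i" for i
  proof (cases "i < k")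
    case True
    have "p i \<le> (\<Sum>i<k. p i)" using True by (intro member_le_sum) auto
    then show ?thesis using True j by (simp add: one_def)
  next
    case False then show ?thesis using p by (simp add: Nk_def)
  qed
  then show ?thesis using chain_props[OF ns e] by (simp add: le_fun_def)
qed

lemma sum_mono_le: fixes b p :: "nat \<Rightarrow> nat" assumes "b \<le> p" shows "(\<Sum>i<k. b i) \<le> (\<Sum>i<k. p i)"
  using assms unfolding le_fun_def by (intro sum_mono) auto

lemma inf_ext:
  assumes ns: nosrc and e: "\<eta> \<in> Mor"
  shows "zpath \<eta> \<in> inf_paths k Mor r s cmp d \<and> zpath \<eta> (\<lambda>_. 0) (\<lambda>_. 0) = r \<eta> \<and> zpath \<eta> (\<lambda>_. 0) (d \<eta>) = \<eta>"
proof (intro conjI)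
  show "zpath \<eta> (\<lambda>_. 0) (\<lambda>_. 0) = r \<eta>"
    unfolding zpath_def using seg00 e by (simp add: chain_def)
  have "zpath \<eta> (\<lambda>_. 0) (d \<eta>) = seg (chain \<eta> 0) (\<lambda>_. 0) (d \<eta>)"
    unfolding zpath_def by (rule chain_seg[OF ns e]) (auto simp: zero_le chain_def)
  then show "zpath \<eta> (\<lambda>_. 0) (d \<eta>) = \<eta>" using seg0d e by (simp add: chain_def)
  show "zpath \<eta> \<in> inf_paths k Mor r s cmp d"
    unfolding inf_paths_def
  proof (safe)
    fix m n assume m: "m \<in> Nk k" and n: "n \<in> Nk k" and mn: "m \<le> n"
    let ?j = "\<Sum>i<k. n i"
    have nd: "n \<le> d (chain \<eta> ?j)" using le_chain[OF ns e n] by simp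
    have z: "zpath \<eta> m n = seg (chain \<eta> ?j) m n" by (simp add: zpath_def)
    show "zpath \<eta> m n \<in> Mor" "d (zpath \<eta> m n) = (\<lambda>i. n i - m i)"
      unfolding z using seg_props[OF _ mn order_refl nd] chain_props[OF ns e] by auto
    fix p assume p: "p \<in> Nk k" and np: "n \<le> p"
    let ?J = "\<Sum>i<k. p i"
    have pd: "p \<le> d (chain \<eta> ?J)" using le_chain[OF ns e p] by simp
    have J: "?j \<le> ?J" using sum_mono_le[OF np] .
    have z1: "zpath \<eta> m n = seg (chain \<eta> ?J) m n"
      unfolding z using chain_seg[OF ns e J mn nd] by simp
    have z2: "zpath \<eta> n p = seg (chain \<eta> ?J) n p" by (simp add: zpath_def)
    have z3: "zpath \<eta> m p = seg (chain \<eta> ?J) m p" by (simp add: zpath_def)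
    show "s (zpath \<eta> m n) = r (zpath \<eta> n p)" "zpath \<eta> m p = cmp (zpath \<eta> m n) (zpath \<eta> n p)"
      unfolding z1 z2 z3 using seg_props[OF _ mn np pd] chain_props[OF ns e] by auto
  qed
qed

end

context KG begin

definition P where "P v p = {l\<in>Mor. r l = v \<and> d l = p}"

lemma finP: "finite_kgraph k Mor d \<Longrightarrow> p \<in> Nk k \<Longrightarrow> finite (P v p)"
  unfolding finite_kgraph_def P_def by (rule finite_subset[of _ "{l\<in>Mor. d l = p}"]) auto

lemma ip: assumes "z \<in> inf_paths k Mor r s cmp d" "m \<in> Nk k" "n \<in> Nk k" "p \<in> Nk k" "m \<le> n" "n \<le> p"
  shows "z m n \<in> Mor" "d (z m n) = (\<lambda>i. n i - m i)" "s (z m n) = r (z n p)" "z m p = cmp (z m n) (z n p)"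
  using assms unfolding inf_paths_def by blast+

lemma zeroNk: "(\<lambda>_. 0) \<in> Nk k" by (simp add: Nk_def)

lemma per_incl:
  assumes ns: nosrc and m: "m \<in> Nk k" and n: "n \<in> Nk k" and a: "a \<in> Nk k" and ma: "m \<le> a" and na: "n \<le> a"
    and \<zeta>: "\<zeta> \<in> Mor" "d \<zeta> = a" "r \<zeta> = v"
    and per: "\<forall>x\<in>Zcyl k Mor r s cmp d v. path_eq k (shift m x) (shift n x)"
    and \<alpha>: "\<alpha> \<in> P (s \<zeta>) m"
  shows "cmp (post \<zeta> m) \<alpha> \<in> cmp (post \<zeta> n) ` P (s \<zeta>) n"
proof -
  have \<alpha>': "\<alpha> \<in> Mor" "r \<alpha> = s \<zeta>" "d \<alpha> = m" using \<alpha> by (auto simp: P_def)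
  let ?\<eta> = "cmp \<zeta> \<alpha>"
  have \<eta>: "?\<eta> \<in> Mor" "r ?\<eta> = v" "d ?\<eta> = (\<lambda>i. a i + m i)"
    using cmpM cmp_rr cmp_d \<zeta> \<alpha>' by auto
  define z where "z = zpath ?\<eta>"
  have zi: "z \<in> inf_paths k Mor r s cmp d" "z (\<lambda>_. 0) (\<lambda>_. 0) = v" "z (\<lambda>_. 0) (\<lambda>i. a i + m i) = ?\<eta>"
    using inf_ext[OF ns \<eta>(1)] \<eta> unfolding z_def by auto
  have zc: "z \<in> Zcyl k Mor r s cmp d v" using zi by (simp add: Zcyl_def)
  have am: "(\<lambda>i. a i + m i) \<in> Nk k" "(\<lambda>i. a i + n i) \<in> Nk k" using Nk_add a m n by auto
  have le1: "a \<le> (\<lambda>i. a i + m i)" "a \<le> (\<lambda>i. a i + n i)" by (auto simp: le_fun_def)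
  have "path_eq k (shift m z) (shift n z)" using per zc by blast
  then have "shift m z (\<lambda>_. 0) a = shift n z (\<lambda>_. 0) a" unfolding path_eq_def using zeroNk a zero_le by blast
  then have E: "z m (\<lambda>i. a i + m i) = z n (\<lambda>i. a i + n i)" by (simp add: shift_def)
  note Z = ip[OF zi(1)]
  have d0a: "d (z (\<lambda>_. 0) a) = a" using Z(2)[OF zeroNk a am(1) zero_le le1(1)] by simp
  have c1: "?\<eta> = cmp (z (\<lambda>_. 0) a) (z a (\<lambda>i. a i + m i))" using Z(4)[OF zeroNk a am(1) zero_le le1(1)] zi(3) by simp
  have z0a: "z (\<lambda>_. 0) a = \<zeta>" "z a (\<lambda>i. a i + m i) = \<alpha>"
    using fac_uniq'[OF Z(1)[OF zeroNk a am(1) zero_le le1(1)] Z(1)[OF a am(1) am(1) le1(1) order_refl] Z(3)[OF zeroNk a am(1) zero_le le1(1)] c1 d0a[symmetric]]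
      fac_uniq[OF \<zeta>(1) \<alpha>'(1) \<alpha>'(2)[symmetric]] \<zeta>(2) by auto
  have pm: "post \<zeta> m = z m a" if mm: "m \<in> Nk k" "m \<le> a" for m
  proof -
    have "\<zeta> = cmp (z (\<lambda>_. 0) m) (z m a)" using Z(4)[OF zeroNk mm(1) a zero_le mm(2)] z0a by simp
    moreover have "d (z (\<lambda>_. 0) m) = m" using Z(2)[OF zeroNk mm(1) a zero_le mm(2)] by simp
    ultimately show ?thesis using fac_uniq'(2)[OF Z(1)[OF zeroNk mm(1) a zero_le mm(2)] Z(1)[OF mm(1) a a mm(2) order_refl] Z(3)[OF zeroNk mm(1) a zero_le mm(2)]] by auto
  qed
  have lhs: "cmp (post \<zeta> m) \<alpha> = z m (\<lambda>i. a i + m i)"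
    using Z(4)[OF m a am(1) ma le1(1)] pm[OF m ma] z0a by simp
  let ?\<beta> = "z a (\<lambda>i. a i + n i)"
  have rhs: "z n (\<lambda>i. a i + n i) = cmp (post \<zeta> n) ?\<beta>"
    using Z(4)[OF n a am(2) na le1(2)] pm[OF n na] by simp
  have \<beta>: "?\<beta> \<in> Mor" "d ?\<beta> = n" "r ?\<beta> = s \<zeta>"
  proof -
    show "?\<beta> \<in> Mor" using Z(1)[OF a am(2) am(2) le1(2) order_refl] .
    show "d ?\<beta> = n" using Z(2)[OF a am(2) am(2) le1(2) order_refl] by simp
    have "r ?\<beta> = s (z n a)" using Z(3)[OF n a am(2) na le1(2)] by simp
    also have "\<dots> = s (post \<zeta> n)" using pm[OF n na] by simp
    also have "\<dots> = s \<zeta>" using fac_rs(2)[OF \<zeta>(1)] na \<zeta>(2) by simp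
    finally show "r ?\<beta> = s \<zeta>" .
  qed
  show ?thesis unfolding lhs E rhs using \<beta> by (auto simp: P_def)
qed

end

context KG begin

lemma split_sum:
  assumes fin: "finite_kgraph k Mor d" and p: "p \<in> Nk k" and q: "q \<in> Nk k"
  shows "(\<Sum>g\<in>P v (\<lambda>i. p i + q i). G g) = (\<Sum>\<alpha>\<in>P v p. \<Sum>\<gamma>\<in>P (s \<alpha>) q. G (cmp \<alpha> \<gamma>))"
proof -
  let ?S = "Sigma (P v p) (\<lambda>\<alpha>. P (s \<alpha>) q)"
  have "(\<Sum>\<alpha>\<in>P v p. \<Sum>\<gamma>\<in>P (s \<alpha>) q. G (cmp \<alpha> \<gamma>)) = (\<Sum>(\<alpha>,\<gamma>)\<in>?S. G (cmp \<alpha> \<gamma>))"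
    using sum.Sigma[of "P v p" "\<lambda>\<alpha>. P (s \<alpha>) q" "\<lambda>\<alpha> \<gamma>. G (cmp \<alpha> \<gamma>)"] finP[OF fin p] finP[OF fin q] by auto
  also have inj: "inj_on (\<lambda>(\<alpha>, \<gamma>). cmp \<alpha> \<gamma>) ?S"
    proof (rule inj_onI, clarsimp)
      fix a g a' g'
      assume h: "a \<in> P v p" "g \<in> P (s a) q" "a' \<in> P v p" "g' \<in> P (s a') q" "cmp a g = cmp a' g'"
      have "pre (cmp a g) p = a" "post (cmp a g) p = g" using fac_uniq'[of a g _ p] h by (auto simp: P_def)
      moreover have "pre (cmp a' g') p = a'" "post (cmp a' g') p = g'" using fac_uniq'[of a' g' _ p] h by (auto simp: P_def)
      ultimately show "a = a' \<and> g = g'" using h(5) by metis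
    qed
  then have "(\<Sum>(\<alpha>,\<gamma>)\<in>?S. G (cmp \<alpha> \<gamma>)) = (\<Sum>g\<in>(\<lambda>(\<alpha>,\<gamma>). cmp \<alpha> \<gamma>) ` ?S. G g)"
    using sum.reindex[OF inj, of G] by (simp add: comp_def case_prod_unfold)
  also have "(\<lambda>(\<alpha>,\<gamma>). cmp \<alpha> \<gamma>) ` ?S = P v (\<lambda>i. p i + q i)"
  proof
    show "(\<lambda>(\<alpha>,\<gamma>). cmp \<alpha> \<gamma>) ` ?S \<subseteq> P v (\<lambda>i. p i + q i)"
      using cmpM cmp_rr cmp_d by (auto simp: P_def)
    show "P v (\<lambda>i. p i + q i) \<subseteq> (\<lambda>(\<alpha>,\<gamma>). cmp \<alpha> \<gamma>) ` ?S"
    proof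
      fix g assume g: "g \<in> P v (\<lambda>i. p i + q i)"
      have pg: "p \<le> d g" using g by (auto simp: P_def le_fun_def)
      note F = fac[OF _ pg]
      have "pre g p \<in> P v p" "post g p \<in> P (s (pre g p)) q" "g = cmp (pre g p) (post g p)"
        using F fac_rs[OF _ pg] g by (auto simp: P_def)
      then show "g \<in> (\<lambda>(\<alpha>,\<gamma>). cmp \<alpha> \<gamma>) ` ?S" by force
    qed
  qed
  finally show ?thesis by simp
qed

lemma finV: "finite_kgraph k Mor d \<Longrightarrow> finite (vertices Mor d)"
  unfolding finite_kgraph_def vertices_def using zeroNk by auto

lemma unitNk: "i < k \<Longrightarrow> unitvec i \<in> Nk k" by (auto simp: unitvec_def Nk_def)

lemma row_sum:
  assumes fin: "finite_kgraph k Mor d" and i: "i < k"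
  shows "(\<Sum>\<gamma>\<in>P x (unitvec i). exp (- \<beta> * y \<gamma>) * h (s \<gamma>)) = mv (vertices Mor d) (B_mat Mor r s d y \<beta> i) h x"
proof -
  let ?V = "vertices Mor d"
  let ?A = "\<lambda>w. paths_between Mor r s d x (unitvec i) w"
  have fA: "finite (?A w)" for w
    using finP[OF fin unitNk[OF i], of x] by (rule rev_finite_subset) (auto simp: P_def paths_between_def)
  have U: "P x (unitvec i) = (\<Union>w\<in>?V. ?A w)"
    using sM ds by (auto simp: P_def paths_between_def vertices_def)
  have "(\<Sum>\<gamma>\<in>P x (unitvec i). exp (- \<beta> * y \<gamma>) * h (s \<gamma>)) = (\<Sum>w\<in>?V. \<Sum>\<gamma>\<in>?A w. exp (- \<beta> * y \<gamma>) * h (s \<gamma>))"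
    unfolding U by (rule sum.UNION_disjoint) (use finV[OF fin] fA in \<open>auto simp: paths_between_def\<close>)
  also have "\<dots> = (\<Sum>w\<in>?V. B_mat Mor r s d y \<beta> i x w * h w)"
    unfolding B_mat_def sum_distrib_right by (intro sum.cong refl) (auto simp: paths_between_def)
  finally show ?thesis by (simp add: mv_def)
qed

lemma y_cmp: "rplus_functor Mor r s cmp d y \<Longrightarrow> a \<in> Mor \<Longrightarrow> b \<in> Mor \<Longrightarrow> s a = r b \<Longrightarrow> y (cmp a b) = y a + y b"
  unfolding rplus_functor_def by blast

lemma exp_split: "exp (- \<beta> * (u + v)) = exp (- \<beta> * u) * exp (- \<beta> * (v::real))"
  by (subst exp_add[symmetric]) (simp add: algebra_simps)
lemma exp_split': "exp (- (\<beta> * (u + v))) = exp (- (\<beta> * u)) * exp (- (\<beta> * (v::real)))"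
  by (subst exp_add[symmetric]) (simp add: algebra_simps)

lemma split_exp:
  assumes fin: "finite_kgraph k Mor d" and yf: "rplus_functor Mor r s cmp d y" and p: "p \<in> Nk k" and q: "q \<in> Nk k"
  shows "(\<Sum>g\<in>P v (\<lambda>i. p i + q i). exp (- \<beta> * y g) * h (s g)) =
     (\<Sum>\<alpha>\<in>P v p. exp (- \<beta> * y \<alpha>) * (\<Sum>\<gamma>\<in>P (s \<alpha>) q. exp (- \<beta> * y \<gamma>) * h (s \<gamma>)))"
  unfolding split_sum[OF fin p q] sum_distrib_left
  by (intro sum.cong refl) (auto simp: P_def y_cmp[OF yf] cmp_ss exp_split exp_split' mult.assoc)

lemma comm:
  assumes fin: "finite_kgraph k Mor d" and yf: "rplus_functor Mor r s cmp d y" and i: "i < k" and j: "j < k"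
  shows "mv (vertices Mor d) (B_mat Mor r s d y \<beta> i) (mv (vertices Mor d) (B_mat Mor r s d y \<beta> j) h) v =
         mv (vertices Mor d) (B_mat Mor r s d y \<beta> j) (mv (vertices Mor d) (B_mat Mor r s d y \<beta> i) h) v"
proof -
  have e: "mv (vertices Mor d) (B_mat Mor r s d y \<beta> i) (mv (vertices Mor d) (B_mat Mor r s d y \<beta> j) h) v =
     (\<Sum>g\<in>P v (\<lambda>l. unitvec i l + unitvec j l). exp (- \<beta> * y g) * h (s g))" if i: "i < k" and j: "j < k" for i j
    unfolding split_exp[OF fin yf unitNk[OF i] unitNk[OF j]] row_sum[OF fin j] row_sum[OF fin i, symmetric] ..
  have "(\<lambda>l. unitvec i l + unitvec j l) = (\<lambda>l. unitvec j l + unitvec i l)" by (simp add: add.commute)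
  then show ?thesis using e[OF i j] e[OF j i] by simp
qed

lemma eigen_sum:
  assumes fin: "finite_kgraph k Mor d" and yf: "rplus_functor Mor r s cmp d y"
    and ev: "\<forall>i<k. \<forall>x\<in>vertices Mor d. mv (vertices Mor d) (B_mat Mor r s d y \<beta> i) u x = t i * u x"
  shows "w \<in> vertices Mor d \<Longrightarrow> p \<in> Nk k \<Longrightarrow>
     (\<Sum>\<alpha>\<in>P w p. exp (- \<beta> * y \<alpha>) * u (s \<alpha>)) = (\<Prod>i<k. t i ^ p i) * u w"
proof (induction "\<Sum>i<k. p i" arbitrary: p w)
  case 0
  then have z: "\<forall>i<k. p i = 0" by simp
  have p0: "p = (\<lambda>_. 0)"
  proof
    fix i show "p i = 0" using z 0(3) by (cases "i < k") (auto simp: Nk_def)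
  qed
  have w: "w \<in> Mor" "d w = (\<lambda>_. 0)" using 0(2) by (auto simp: vertices_def)
  have "P w p = {w}"
  proof
    show "P w p \<subseteq> {w}" using vert_rs p0 by (auto simp: P_def)
    show "{w} \<subseteq> P w p" using vert_rs[OF w] w p0 by (auto simp: P_def)
  qed
  moreover have "y w = 0" using yf 0(2) by (simp add: rplus_functor_def)
  ultimately show ?case using vert_rs[OF w] z by simp
next
  case (Suc n)
  have "\<exists>i<k. p i \<noteq> 0"
  proof (rule ccontr)
    assume "\<not> (\<exists>i<k. p i \<noteq> 0)"
    then have "(\<Sum>i<k. p i) = 0" by simp
    with Suc.hyps(2) show False by simp
  qed
  then obtain i where i: "i < k" "p i > 0" by blast
  define p' where "p' = p(i := p i - 1)"
  have p'Nk: "p' \<in> Nk k" using Suc.prems(2) i by (auto simp: Nk_def p'_def)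
  have pp: "p = (\<lambda>j. p' j + unitvec i j)" using i by (auto simp: p'_def unitvec_def fun_eq_iff)
  have "(\<Sum>j<k. p j) = (\<Sum>j<k. p' j) + 1"
  proof -
    have "(\<Sum>j<k. p j) = p i + (\<Sum>j\<in>{..<k}-{i}. p j)" using i by (simp add: sum.remove)
    moreover have "(\<Sum>j<k. p' j) = p' i + (\<Sum>j\<in>{..<k}-{i}. p' j)" using i by (simp add: sum.remove)
    moreover have "(\<Sum>j\<in>{..<k}-{i}. p' j) = (\<Sum>j\<in>{..<k}-{i}. p j)" by (auto simp: p'_def)
    ultimately show ?thesis using i by (simp add: p'_def)
  qed
  then have n: "n = (\<Sum>j<k. p' j)" using Suc.hyps(2) by simp
  have sv: "\<alpha> \<in> P w p' \<Longrightarrow> s \<alpha> \<in> vertices Mor d" for \<alpha> using sM ds by (auto simp: P_def vertices_def)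
  have pr: "t i * (\<Prod>j<k. t j ^ p' j) = (\<Prod>j<k. t j ^ p j)"
  proof -
    have "(\<Prod>j<k. t j ^ p j) = t j0 ^ p j0 * (\<Prod>j\<in>{..<k}-{j0}. t j ^ p j)" if "j0 < k" for j0 p
      using that by (simp add: prod.remove)
    then have a: "(\<Prod>j<k. t j ^ p j) = t i ^ p i * (\<Prod>j\<in>{..<k}-{i}. t j ^ p j)"
       and b: "(\<Prod>j<k. t j ^ p' j) = t i ^ p' i * (\<Prod>j\<in>{..<k}-{i}. t j ^ p' j)" using i by auto
    have c: "(\<Prod>j\<in>{..<k}-{i}. t j ^ p' j) = (\<Prod>j\<in>{..<k}-{i}. t j ^ p j)" by (auto simp: p'_def)
    have "p i = Suc (p' i)" using i by (simp add: p'_def)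
    then show ?thesis unfolding a b c by simp
  qed
  have "(\<Sum>\<alpha>\<in>P w p. exp (- \<beta> * y \<alpha>) * u (s \<alpha>)) =
      (\<Sum>\<alpha>\<in>P w p'. exp (- \<beta> * y \<alpha>) * (\<Sum>\<gamma>\<in>P (s \<alpha>) (unitvec i). exp (- \<beta> * y \<gamma>) * u (s \<gamma>)))"
    by (subst pp, rule split_exp[OF fin yf p'Nk unitNk[OF i(1)]])
  also have "\<dots> = (\<Sum>\<alpha>\<in>P w p'. exp (- \<beta> * y \<alpha>) * (t i * u (s \<alpha>)))"
    using row_sum[OF fin i(1)] ev i sv by (intro sum.cong refl) auto
  also have "\<dots> = t i * (\<Sum>\<alpha>\<in>P w p'. exp (- \<beta> * y \<alpha>) * u (s \<alpha>))"
    by (simp add: sum_distrib_left mult_ac)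
  also have "\<dots> = t i * ((\<Prod>j<k. t j ^ p' j) * u w)" using Suc.hyps(1)[OF n Suc.prems(1) p'Nk] by simp
  also have "t i * ((\<Prod>j<k. t j ^ p' j) * u w) = (\<Prod>j<k. t j ^ p j) * u w"
    by (simp add: pr[symmetric] mult.assoc)
  finally show ?case .
qed

end

lemma sum_pos_iff_nn:
  fixes f :: "'b \<Rightarrow> real"
  assumes "finite A" "\<forall>x\<in>A. 0 \<le> f x"
  shows "(\<Sum>x\<in>A. f x) > 0 \<longleftrightarrow> (\<exists>x\<in>A. f x > 0)"
proof
  assume h: "(\<Sum>x\<in>A. f x) > 0"
  show "\<exists>x\<in>A. f x > 0"
  proof (rule ccontr)
    assume "\<not> ?thesis"
    then have "(\<Sum>x\<in>A. f x) \<le> 0" by (intro sum_nonpos) auto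
    then show False using h by simp
  qed
next
  assume "\<exists>x\<in>A. f x > 0"
  then obtain x where x: "x \<in> A" "f x > 0" by blast
  have "f x \<le> (\<Sum>x\<in>A. f x)" using assms x by (intro member_le_sum) auto
  then show "(\<Sum>x\<in>A. f x) > 0" using x by simp
qed

lemma irr_transfer:
  assumes fin: "finite V" and nn: "nonneg V M" and nn': "nonneg V M'"
    and eq: "\<forall>v\<in>V. \<forall>w\<in>V. M v w > 0 \<longleftrightarrow> M' v w > 0"
    and irr: "irreducible_mat V M"
  shows "irreducible_mat V M'"
proof -
  have "v \<in> V \<Longrightarrow> w \<in> V \<Longrightarrow> mat_pow V M n v w > 0 \<longleftrightarrow> mat_pow V M' n v w > 0" for n v w
  proof (induction n arbitrary: w)
    case 0 then show ?case by simp
  next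
    case (Suc n)
    have a: "(\<Sum>u\<in>V. mat_pow V M n v u * M u w) > 0 \<longleftrightarrow> (\<exists>u\<in>V. mat_pow V M n v u * M u w > 0)"
      using mat_pow_nonneg[OF nn Suc.prems(1)] nn Suc.prems(2)
      by (intro sum_pos_iff_nn[OF fin]) (auto simp: nonneg_def)
    have b: "(\<Sum>u\<in>V. mat_pow V M' n v u * M' u w) > 0 \<longleftrightarrow> (\<exists>u\<in>V. mat_pow V M' n v u * M' u w > 0)"
      using mat_pow_nonneg[OF nn' Suc.prems(1)] nn' Suc.prems(2)
      by (intro sum_pos_iff_nn[OF fin]) (auto simp: nonneg_def)
    have c: "mat_pow V M n v u * M u w > 0 \<longleftrightarrow> mat_pow V M' n v u * M' u w > 0" if u: "u \<in> V" for u
    proof -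
      have "0 \<le> mat_pow V M n v u" "0 \<le> M u w" "0 \<le> mat_pow V M' n v u" "0 \<le> M' u w"
        using mat_pow_nonneg[OF nn Suc.prems(1) u] mat_pow_nonneg[OF nn' Suc.prems(1) u] nn nn' u Suc.prems(2)
        by (auto simp: nonneg_def)
      then show ?thesis using Suc.IH[OF Suc.prems(1) u] eq u Suc.prems(2)
        by (auto simp: zero_less_mult_iff less_le)
    qed
    show ?case using a b c by simp
  qed
  then show ?thesis using irr unfolding irreducible_mat_def by blast
qed

context KG begin

lemma B_nonneg: "nonneg (vertices Mor d) (B_mat Mor r s d y \<beta> i)"
  unfolding nonneg_def B_mat_def by (auto intro: sum_nonneg)

lemma B_pos_iff:
  assumes fin: "finite_kgraph k Mor d" and i: "i < k"
  shows "B_mat Mor r s d y \<beta> i v w > 0 \<longleftrightarrow> coord_mat Mor r s d i v w > 0"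
proof -
  have f: "finite (paths_between Mor r s d v (unitvec i) w)"
    using finP[OF fin unitNk[OF i], of v] by (rule rev_finite_subset) (auto simp: P_def paths_between_def)
  show ?thesis unfolding B_mat_def coord_mat_def
    using f by (cases "paths_between Mor r s d v (unitvec i) w = {}") (auto intro!: sum_pos simp: card_gt_0_iff)
qed

lemma A_nonneg: "nonneg (vertices Mor d) (coord_mat Mor r s d i)"
  unfolding nonneg_def coord_mat_def by auto

lemma nosrc_from_irr:
  assumes fin: "finite_kgraph k Mor d" and irr: "\<forall>i<k. irreducible_mat (vertices Mor d) (coord_mat Mor r s d i)"
  shows nosrc
  unfolding nosrc_def
proof (intro ballI impI allI)
  fix w i assume w: "w \<in> Mor" "d w = (\<lambda>_. 0)" and i: "i < k"
  have wV: "w \<in> vertices Mor d" using w by (simp add: vertices_def)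
  obtain n where n: "n \<ge> 1" "mat_pow (vertices Mor d) (coord_mat Mor r s d i) n w w > 0"
    using irr i wV unfolding irreducible_mat_def by blast
  obtain u where u: "u \<in> vertices Mor d" "coord_mat Mor r s d i w u > 0"
    using rowpos[OF finV[OF fin] A_nonneg wV wV n] by blast
  then have "paths_between Mor r s d w (unitvec i) u \<noteq> {}" by (auto simp: coord_mat_def)
  then show "\<exists>e\<in>Mor. r e = w \<and> d e = unitvec i" by (auto simp: paths_between_def)
qed

end

lemma mv_apply: "mv V M h v = (\<Sum>w\<in>V. M v w * h w)" by (simp add: mv_def)

lemma ln_prod_pow:
  assumes "\<forall>i<k. (t::nat \<Rightarrow> real) i > 0"
  shows "ln (\<Prod>i<k. t i ^ q i) = (\<Sum>i<k. real (q i) * ln (t i))"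
proof -
  have "ln (\<Prod>i<k. t i ^ q i) = (\<Sum>i<k. ln (t i ^ q i))" using assms by (intro ln_prod) auto
  also have "\<dots> = (\<Sum>i<k. real (q i) * ln (t i))" using assms by (intro sum.cong refl) (simp add: ln_realpow)
  finally show ?thesis .
qed

lemma gen_zero: "x \<in> gen_subgroup S \<Longrightarrow> \<forall>g\<in>S. g = (\<lambda>_. 0) \<Longrightarrow> x = (\<lambda>_. 0)"
  by (induction rule: gen_subgroup.induct) auto

theorem corollary4p11:
  fixes k :: nat and Mor :: "'a set" and r s :: "'a \<Rightarrow> 'a" and cmp :: "'a \<Rightarrow> 'a \<Rightarrow> 'a"
    and d :: "'a \<Rightarrow> nat \<Rightarrow> nat" and y :: "'a \<Rightarrow> real" and \<beta> :: real
  assumes "kgraph k Mor r s cmp d"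
    and "finite_kgraph k Mor d"
    and "\<forall>i<k. irreducible_mat (vertices Mor d) (coord_mat Mor r s d i)"
    and "rplus_functor Mor r s cmp d y"
    and "\<beta> > 0"
    and "\<forall>l\<in>Mor. \<forall>\<nu>\<in>Mor.
           y l + (1 / \<beta>) * ln (\<Prod>i<k. spectral_radius_mat (vertices Mor d) (B_mat Mor r s d y \<beta> i) ^ d l i)
         = y \<nu> + (1 / \<beta>) * ln (\<Prod>i<k. spectral_radius_mat (vertices Mor d) (B_mat Mor r s d y \<beta> i) ^ d \<nu> i)
         \<longrightarrow> d l = d \<nu>"
  shows "aperiodic k Mor r s cmp d"
proof -
  interpret KG k Mor r s cmp d using assms(1) by unfold_locales
  let ?V = "vertices Mor d"
  let ?B = "\<lambda>i. B_mat Mor r s d y \<beta> i"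
  note fin = assms(2) and yf = assms(4)
  have fV: "finite ?V" using finV[OF fin] .
  have ns: nosrc using nosrc_from_irr[OF fin assms(3)] .
  have Birr: "irreducible_mat ?V (?B i)" if i: "i < k" for i
  proof (rule irr_transfer[OF fV A_nonneg B_nonneg])
    show "\<forall>v\<in>?V. \<forall>w\<in>?V. 0 < coord_mat Mor r s d i v w \<longleftrightarrow> 0 < ?B i v w" using B_pos_iff[OF fin i] by blast
    show "irreducible_mat ?V (coord_mat Mor r s d i)" using assms(3) i by blast
  qed
  have key: "m = n" if v: "v \<in> ?V" and m: "m \<in> Nk k" and n: "n \<in> Nk k"
    and per: "\<forall>x\<in>Zcyl k Mor r s cmp d v. path_eq k (shift m x) (shift n x)" for v m n
  proof (cases "k = 0")
    case True then show ?thesis using m n by (auto simp: Nk_def fun_eq_iff)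
  next
    case False
    then have k0: "0 < k" by simp
    have ne: "?V \<noteq> {}" using v by blast
    obtain u t0 where u: "t0 > 0" "\<forall>v\<in>?V. u v > 0" "\<forall>v\<in>?V. mv ?V (?B 0) u v = t0 * u v"
      using pf_exists[OF fV ne B_nonneg Birr[OF k0]] by blast
    have ceig: "\<exists>c. c > 0 \<and> (\<forall>v\<in>?V. mv ?V (?B j) u v = c * u v)" if j: "j < k" for j
    proof -
      have "\<forall>w\<in>?V. mv ?V (?B 0) (mv ?V (?B j) u) w = t0 * mv ?V (?B j) u w"
      proof
        fix w assume w: "w \<in> ?V"
        have "mv ?V (?B 0) (mv ?V (?B j) u) w = mv ?V (?B j) (mv ?V (?B 0) u) w" using comm[OF fin yf k0 j] .
        also have "\<dots> = (\<Sum>x\<in>?V. ?B j w x * (t0 * u x))"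
          unfolding mv_apply[of ?V "?B j" "mv ?V (?B 0) u" w] using u(3) by (intro sum.cong refl) simp
        also have "\<dots> = t0 * mv ?V (?B j) u w" by (simp add: mv_apply sum_distrib_left mult_ac)
        finally show "mv ?V (?B 0) (mv ?V (?B j) u) w = t0 * mv ?V (?B j) u w" .
      qed
      then obtain c where c: "\<forall>v\<in>?V. mv ?V (?B j) u v = c * u v"
        using uniq_eig[OF fV ne B_nonneg Birr[OF k0] u(2) u(3)] by blast
      obtain v1 where v1: "v1 \<in> ?V" using ne by blast
      obtain n1 where n1: "n1 \<ge> 1" "mat_pow ?V (?B j) n1 v1 v1 > 0" using Birr[OF j] v1 unfolding irreducible_mat_def by blast
      obtain u1 where u1: "u1 \<in> ?V" "?B j v1 u1 > 0" using rowpos[OF fV B_nonneg v1 v1 n1] by blast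
      have "?B j v1 u1 * u u1 \<le> mv ?V (?B j) u v1"
        unfolding mv_apply using fV u1 u(2) B_nonneg v1
        by (intro member_le_sum[of u1 ?V "\<lambda>w. ?B j v1 w * u w"]) (auto simp: nonneg_def less_imp_le)
      moreover have "?B j v1 u1 * u u1 > 0" using u1 u(2) by simp
      ultimately have "c * u v1 > 0" using c v1 by simp
      moreover have "u v1 > 0" using u(2) v1 by blast
      ultimately have "c > 0" by (simp add: zero_less_mult_iff)
      then show ?thesis using c by blast
    qed
    define t where "t j = (SOME c. c > 0 \<and> (\<forall>v\<in>?V. mv ?V (?B j) u v = c * u v))" for j
    have t: "t j > 0 \<and> (\<forall>v\<in>?V. mv ?V (?B j) u v = t j * u v)" if "j < k" for j
      using someI_ex[OF ceig[OF that]] unfolding t_def .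
    have rho: "spectral_radius_mat ?V (?B j) = t j" if "j < k" for j
      using spec_rad[OF fV ne B_nonneg u(2)] t[OF that] by blast
    have tpos: "\<forall>i<k. t i > 0" using t by blast
    have ev: "\<forall>i<k. \<forall>x\<in>?V. mv ?V (?B i) u x = t i * u x" using t by blast
    note ES = eigen_sum[OF fin yf ev]
    define a where "a = (\<lambda>i. max (m i) (n i))"
    have aNk: "a \<in> Nk k" using m n by (auto simp: Nk_def a_def)
    have ma: "m \<le> a" "n \<le> a" by (auto simp: le_fun_def a_def)
    have vM: "v \<in> Mor" "d v = (\<lambda>_. 0)" using v by (auto simp: vertices_def)
    obtain \<zeta> where \<zeta>: "\<zeta> \<in> Mor" "d \<zeta> = a" "r \<zeta> = v" using ext_exists[OF ns vM aNk] by blast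
    have per': "\<forall>x\<in>Zcyl k Mor r s cmp d v. path_eq k (shift n x) (shift m x)"
    proof
      fix x assume "x \<in> Zcyl k Mor r s cmp d v"
      then have "path_eq k (shift m x) (shift n x)" using per by blast
      then show "path_eq k (shift n x) (shift m x)" unfolding path_eq_def by fastforce
    qed
    have S1: "cmp (post \<zeta> m) ` P (s \<zeta>) m \<subseteq> cmp (post \<zeta> n) ` P (s \<zeta>) n"
      using per_incl[OF ns m n aNk ma \<zeta> per] by blast
    have S2: "cmp (post \<zeta> n) ` P (s \<zeta>) n \<subseteq> cmp (post \<zeta> m) ` P (s \<zeta>) m"
      using per_incl[OF ns n m aNk ma(2) ma(1) \<zeta> per'] by blast
    have sV: "s \<zeta> \<in> ?V" using sM[OF \<zeta>(1)] ds[OF \<zeta>(1)] by (simp add: vertices_def)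
    have W: "(\<Sum>\<eta>\<in>cmp (post \<zeta> q) ` P (s \<zeta>) q. exp (- \<beta> * y \<eta>) * u (s \<eta>))
        = exp (- \<beta> * y (post \<zeta> q)) * ((\<Prod>i<k. t i ^ q i) * u (s \<zeta>))"
      if q: "q \<in> Nk k" "q \<le> a" for q
    proof -
      have qd: "q \<le> d \<zeta>" using q \<zeta>(2) by simp
      have F: "post \<zeta> q \<in> Mor" using fac[OF \<zeta>(1) qd] by blast
      have sl: "s (post \<zeta> q) = s \<zeta>" using fac_rs[OF \<zeta>(1) qd] by simp
      have inj: "inj_on (cmp (post \<zeta> q)) (P (s \<zeta>) q)"
      proof (rule inj_onI)
        fix x x' assume h: "x \<in> P (s \<zeta>) q" "x' \<in> P (s \<zeta>) q" "cmp (post \<zeta> q) x = cmp (post \<zeta> q) x'"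
        have "x \<in> Mor" "r x = s (post \<zeta> q)" "x' \<in> Mor" "r x' = s (post \<zeta> q)" using h sl by (auto simp: P_def)
        then have "post (cmp (post \<zeta> q) x) (d (post \<zeta> q)) = x" "post (cmp (post \<zeta> q) x') (d (post \<zeta> q)) = x'"
          using fac_uniq[of "post \<zeta> q" x] fac_uniq[of "post \<zeta> q" x'] F by auto
        then show "x = x'" using h(3) by metis
      qed
      have "(\<Sum>\<eta>\<in>cmp (post \<zeta> q) ` P (s \<zeta>) q. exp (- \<beta> * y \<eta>) * u (s \<eta>))
          = (\<Sum>\<alpha>\<in>P (s \<zeta>) q. exp (- \<beta> * y (cmp (post \<zeta> q) \<alpha>)) * u (s (cmp (post \<zeta> q) \<alpha>)))"
        using sum.reindex[OF inj, of "\<lambda>\<eta>. exp (- \<beta> * y \<eta>) * u (s \<eta>)"] by (simp add: comp_def)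
      also have "\<dots> = (\<Sum>\<alpha>\<in>P (s \<zeta>) q. exp (- \<beta> * y (post \<zeta> q)) * (exp (- \<beta> * y \<alpha>) * u (s \<alpha>)))"
        using F sl by (intro sum.cong refl) (auto simp: P_def y_cmp[OF yf] cmp_ss exp_split exp_split' mult.assoc)
      also have "\<dots> = exp (- \<beta> * y (post \<zeta> q)) * (\<Sum>\<alpha>\<in>P (s \<zeta>) q. exp (- \<beta> * y \<alpha>) * u (s \<alpha>))"
        by (simp add: sum_distrib_left)
      also have "\<dots> = exp (- \<beta> * y (post \<zeta> q)) * ((\<Prod>i<k. t i ^ q i) * u (s \<zeta>))"
        using ES[OF sV q(1)] by simp
      finally show ?thesis .
    qed
    have Seq: "cmp (post \<zeta> m) ` P (s \<zeta>) m = cmp (post \<zeta> n) ` P (s \<zeta>) n" using S1 S2 by blast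
    have E0: "exp (- \<beta> * y (post \<zeta> m)) * ((\<Prod>i<k. t i ^ m i) * u (s \<zeta>))
            = exp (- \<beta> * y (post \<zeta> n)) * ((\<Prod>i<k. t i ^ n i) * u (s \<zeta>))"
      using W[OF m ma(1)] W[OF n ma(2)] Seq by simp
    have usz: "u (s \<zeta>) > 0" using u(2) sV by blast
    have E1: "exp (- \<beta> * y (post \<zeta> m)) * (\<Prod>i<k. t i ^ m i) = exp (- \<beta> * y (post \<zeta> n)) * (\<Prod>i<k. t i ^ n i)"
      using E0 usz by (simp add: mult.assoc[symmetric])
    have ppos: "(\<Prod>i<k. t i ^ q i) > 0" for q using tpos by (intro prod_pos) auto
    have lnE: "ln (exp (- \<beta> * y l) * (\<Prod>i<k. t i ^ q i)) = - \<beta> * y l + (\<Sum>i<k. real (q i) * ln (t i))" for l q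
    proof -
      have "ln (exp (- \<beta> * y l) * (\<Prod>i<k. t i ^ q i)) = ln (exp (- \<beta> * y l)) + ln (\<Prod>i<k. t i ^ q i)"
      proof -
        have ne: "exp (- \<beta> * y l) \<noteq> 0 \<and> (\<Prod>i<k. t i ^ q i) \<noteq> 0"
          using exp_gt_zero[of "- \<beta> * y l"] ppos[of q] by (metis order_less_irrefl)
        show ?thesis unfolding ln_mult if_P[OF ne] ..
      qed
      then show ?thesis using ln_prod_pow[OF tpos, of q] by (simp only: ln_exp)
    qed
    define Lg where "Lg = (\<lambda>q. (\<Sum>i<k. real (q i) * ln (t i)))"
    have E2: "- \<beta> * y (post \<zeta> m) + Lg m = - \<beta> * y (post \<zeta> n) + Lg n"
      using arg_cong[OF E1, of ln] lnE unfolding Lg_def by simp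
    have dpost: "d (post \<zeta> q) = (\<lambda>i. a i - q i)" if "q \<le> a" for q using fac[OF \<zeta>(1), of q] that \<zeta>(2) by auto
    have Lsub: "Lg (\<lambda>i. a i - q i) = Lg a - Lg q" if "q \<le> a" for q
    proof -
      have "Lg (\<lambda>i. a i - q i) = (\<Sum>i<k. real (a i) * ln (t i) - real (q i) * ln (t i))"
        unfolding Lg_def using that by (intro sum.cong refl) (auto simp: le_fun_def of_nat_diff left_diff_distrib)
      then show ?thesis unfolding Lg_def by (simp add: sum_subtractf)
    qed
    have prodrho: "(\<Prod>i<k. spectral_radius_mat ?V (?B i) ^ q i) = (\<Prod>i<k. t i ^ q i)" for q
      using rho by (intro prod.cong refl) auto
    have "y (post \<zeta> m) + (1 / \<beta>) * ln (\<Prod>i<k. spectral_radius_mat ?V (?B i) ^ d (post \<zeta> m) i)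
        = y (post \<zeta> n) + (1 / \<beta>) * ln (\<Prod>i<k. spectral_radius_mat ?V (?B i) ^ d (post \<zeta> n) i)"
    proof -
      have lhs: "ln (\<Prod>i<k. spectral_radius_mat ?V (?B i) ^ d (post \<zeta> q) i) = Lg a - Lg q" if "q \<le> a" for q
        unfolding prodrho dpost[OF that] ln_prod_pow[OF tpos] using Lsub[OF that] unfolding Lg_def .
      have "y (post \<zeta> m) + (1 / \<beta>) * (Lg a - Lg m) = y (post \<zeta> n) + (1 / \<beta>) * (Lg a - Lg n)"
      proof -
        have "\<beta> * (y (post \<zeta> m) + (1 / \<beta>) * (Lg a - Lg m)) = \<beta> * (y (post \<zeta> n) + (1 / \<beta>) * (Lg a - Lg n))"
          using E2 assms(5) by (simp add: algebra_simps)
        then show ?thesis using assms(5) by simp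
      qed
      then show ?thesis using lhs[OF ma(1)] lhs[OF ma(2)] by simp
    qed
    moreover have "post \<zeta> m \<in> Mor" "post \<zeta> n \<in> Mor" using fac[OF \<zeta>(1)] ma \<zeta>(2) by blast+
    ultimately have "d (post \<zeta> m) = d (post \<zeta> n)" using assms(6) by blast
    then have "(\<lambda>i. a i - m i) = (\<lambda>i. a i - n i)" using dpost ma by simp
    then have eq: "\<And>i. a i - m i = a i - n i" by metis
    show "m = n"
    proof
      fix i
      have "m i \<le> a i" "n i \<le> a i" using ma by (auto simp: le_fun_def)
      then show "m i = n i" using eq[of i] by linarith
    qed
  qed
  show ?thesis
    unfolding aperiodic_def Per_def
  proof (intro ballI)
    fix v assume v: "v \<in> ?V"
    have G: "\<forall>g\<in>per_gens k Mor r s cmp d v. g = (\<lambda>_. 0)"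
    proof
      fix g assume "g \<in> per_gens k Mor r s cmp d v"
      then obtain m n where g: "g = (\<lambda>i. int (m i) - int (n i))" "m \<in> Nk k" "n \<in> Nk k"
        "\<forall>x\<in>Zcyl k Mor r s cmp d v. path_eq k (shift m x) (shift n x)" unfolding per_gens_def by blast
      have "m = n" using key[OF v g(2,3,4)] .
      then show "g = (\<lambda>_. 0)" using g(1) by simp
    qed
    show "gen_subgroup (per_gens k Mor r s cmp d v) = {\<lambda>_. 0}"
      using gen_zero[OF _ G] gen_subgroup.zero by blast
  qed
qed

end
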